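(* Let $\tau_1\in\mathcal{L}_0^*$ and $\tau_2\in\mathcal{L}_0$ with $\tau_1\subsetneq\tau_2$. Then there exist a chain $\mathcal{R}\subset\mathcal{L}_0$ with $|\mathcal{R}|=\mathfrak{c}$, a family $\mathcal{S}\subset\mathcal{L}_0$ of pairwise incomparable topologies with $|\mathcal{S}|=\mathfrak{c}$, and a family $\mathcal{T}\subset\mathcal{L}_0\setminus\mathcal{L}_0^*$ of pairwise incomparable topologies with $|\mathcal{T}|=2^{\mathfrak{c}}$, such that $\tau_1\subset\tau\subset\tau_2$ for every $\tau\in\mathcal{R}\cup\mathcal{S}\cup\mathcal{T}$. Moreover, if $\tau_2\in\mathcal{L}_0^*$ then $\mathcal{R},\mathcal{S}$ can be chosen with $\mathcal{R},\mathcal{S}\subset\mathcal{L}_0^*$; and if $\tau_2=\eta$ then $\mathcal{R},\mathcal{S}$ can be chosen with $\mathcal{R},\mathcal{S}\subset\mathcal{L}_0^*$ and such that all spaces $(\mathbb{R},\tau)$ with $\tau\in\mathcal{R}\cup\mathcal{S}$ are pairwise homeomorphic.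
   Context: $\mathfrak{c}=|\mathbb{R}|$. $\eta$ denotes the Euclidean topology on $\mathbb{R}$. $\mathcal{L}$ denotes the family of all Hausdorff topologies $\tau$ on $\mathbb{R}$ with $\tau\subset\eta$. For $\tau\in\mathcal{L}$ and $a\in\mathbb{R}$ let $\mathcal{N}_\tau(a)$ be the neighborhood filter of $a$ in $(\mathbb{R},\tau)$; let $C(\tau)$ be the set of all $a$ with $\mathcal{N}_\tau(a)\neq\mathcal{N}_\eta(a)$. $\mathcal{L}_0:=\{\tau\in\mathcal{L}\mid C(\tau)\subset\{0\}\}$. $\mathcal{L}_0^*$ denotes the family of all $\tau\in\mathcal{L}_0$ such that $\mathcal{N}_\tau(0)=\mathcal{N}_\eta(0)\cap\mathcal{F}$ for some filter $\mathcal{F}$ on $\mathbb{R}$ generated by a countable filter base. A chain is a family of topologies totally ordered by inclusion; two topologies are incomparable if neither is a subset of the other. *)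

theory Defs
  imports "HOL-Analysis.Analysis" "HOL-Library.Equipollence"
begin

text \<open>Topologies on the reals are represented by their families of open sets.\<close>

definition eta :: "real set set" where
  "eta = {U. open U}"

abbreviation top_of :: "real set set \<Rightarrow> real topology" where
  "top_of \<tau> \<equiv> topology (\<lambda>U. U \<in> \<tau>)"

definition Lfam :: "real set set set" where
  "Lfam = {\<tau>. istopology (\<lambda>U. U \<in> \<tau>) \<and> UNIV \<in> \<tau> \<and> Hausdorff_space (top_of \<tau>) \<and> \<tau> \<subseteq> eta}"

definition nbhds :: "real set set \<Rightarrow> real \<Rightarrow> real set set" where
  "nbhds \<tau> a = {A. \<exists>U\<in>\<tau>. a \<in> U \<and> U \<subseteq> A}"

definition Cset :: "real set set \<Rightarrow> real set" where
  "Cset \<tau> = {a. nbhds \<tau> a \<noteq> nbhds eta a}"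

definition L0 :: "real set set set" where
  "L0 = {\<tau> \<in> Lfam. Cset \<tau> \<subseteq> {0}}"

definition countably_based_filter :: "real set set \<Rightarrow> bool" where
  "countably_based_filter F \<longleftrightarrow>
     (\<exists>B. countable B \<and> B \<noteq> {} \<and> {} \<notin> B \<and>
          (\<forall>b1\<in>B. \<forall>b2\<in>B. \<exists>b3\<in>B. b3 \<subseteq> b1 \<inter> b2) \<and>
          F = {A. \<exists>b\<in>B. b \<subseteq> A})"

definition L0star :: "real set set set" where
  "L0star = {\<tau> \<in> L0. \<exists>F. countably_based_filter F \<and> nbhds \<tau> 0 = nbhds eta 0 \<inter> F}"

definition topchain :: "real set set set \<Rightarrow> bool" where
  "topchain R \<longleftrightarrow> (\<forall>\<sigma>\<in>R. \<forall>\<sigma>'\<in>R. \<sigma> \<subseteq> \<sigma>' \<or> \<sigma>' \<subseteq> \<sigma>)"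

definition pairwise_incomparable :: "real set set set \<Rightarrow> bool" where
  "pairwise_incomparable S \<longleftrightarrow>
     (\<forall>\<sigma>\<in>S. \<forall>\<sigma>'\<in>S. \<sigma> \<noteq> \<sigma>' \<longrightarrow> \<not> \<sigma> \<subseteq> \<sigma>' \<and> \<not> \<sigma>' \<subseteq> \<sigma>)"

end

theory Submission
  imports Defs
begin


lemma openin_top_of: "istopology (\<lambda>U. U \<in> (\<tau>::real set set)) \<Longrightarrow> openin (top_of \<tau>) U \<longleftrightarrow> U \<in> \<tau>"
  by simp

lemma Lfam_topo: "\<tau> \<in> Lfam \<Longrightarrow> istopology (\<lambda>U. U \<in> \<tau>)"
  by (simp add: Lfam_def)

lemma L0_Lfam: "\<tau> \<in> L0 \<Longrightarrow> \<tau> \<in> Lfam"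
  by (simp add: L0_def)

lemma L0_topo: "\<tau> \<in> L0 \<Longrightarrow> istopology (\<lambda>U. U \<in> \<tau>)"
  by (simp add: L0_def Lfam_def)

lemma L0_UNIV: "\<tau> \<in> L0 \<Longrightarrow> UNIV \<in> \<tau>"
  by (simp add: L0_def Lfam_def)

lemma L0_eta: "\<tau> \<in> L0 \<Longrightarrow> \<tau> \<subseteq> eta"
  by (simp add: L0_def Lfam_def)

lemma L0_open: "\<tau> \<in> L0 \<Longrightarrow> U \<in> \<tau> \<Longrightarrow> open U"
  using L0_eta eta_def by blast

lemma topo_Un: "istopology (\<lambda>U. U \<in> (\<tau>::real set set)) \<Longrightarrow> U \<in> \<tau> \<Longrightarrow> V \<in> \<tau> \<Longrightarrow> U \<union> V \<in> \<tau>"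
  using openin_Un[of "top_of \<tau>" U V] by simp

lemma topo_Int: "istopology (\<lambda>U. U \<in> (\<tau>::real set set)) \<Longrightarrow> U \<in> \<tau> \<Longrightarrow> V \<in> \<tau> \<Longrightarrow> U \<inter> V \<in> \<tau>"
  using openin_Int[of "top_of \<tau>" U V] by simp

lemma topo_Union: "istopology (\<lambda>U. U \<in> (\<tau>::real set set)) \<Longrightarrow> K \<subseteq> \<tau> \<Longrightarrow> \<Union>K \<in> \<tau>"
  using openin_Union[of K "top_of \<tau>"] by auto

lemma nbhds_mono: "\<tau> \<subseteq> \<sigma> \<Longrightarrow> nbhds \<tau> a \<subseteq> nbhds \<sigma> a"
  unfolding nbhds_def by blast

lemma nbhds_mem: "U \<in> \<tau> \<Longrightarrow> a \<in> U \<Longrightarrow> U \<in> nbhds \<tau> a"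
  unfolding nbhds_def by blast

lemma nbhds_eta_ball: "0 < e \<Longrightarrow> ball a e \<in> nbhds eta a"
  unfolding nbhds_def eta_def by (rule CollectI, rule bexI[of _ "ball a e"]) auto

lemma nbhds_etaD: "V \<in> nbhds eta a \<Longrightarrow> \<exists>e>0. ball a e \<subseteq> V"
proof -
  assume "V \<in> nbhds eta a"
  then obtain U where "open U" "a \<in> U" "U \<subseteq> V" unfolding nbhds_def eta_def by auto
  then obtain e where "e > 0" "ball a e \<subseteq> U" using open_contains_ball by blast
  thus ?thesis using \<open>U \<subseteq> V\<close> by blast
qed

lemma L0_nbhds_eq: "\<tau> \<in> L0 \<Longrightarrow> a \<noteq> 0 \<Longrightarrow> nbhds \<tau> a = nbhds eta a"
  unfolding L0_def Cset_def by auto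

lemma L0_openI:
  assumes "\<tau> \<in> L0" "open U" "0 \<in> U \<Longrightarrow> U \<in> nbhds \<tau> 0"
  shows "U \<in> \<tau>"
proof -
  have "U = \<Union>{V \<in> \<tau>. V \<subseteq> U}"
  proof
    show "U \<subseteq> \<Union>{V \<in> \<tau>. V \<subseteq> U}"
    proof
      fix a assume a: "a \<in> U"
      show "a \<in> \<Union>{V \<in> \<tau>. V \<subseteq> U}"
      proof (cases "a = 0")
        case True
        then show ?thesis using assms(3) a unfolding nbhds_def by auto
      next
        case False
        have "U \<in> nbhds eta a" using a assms(2) unfolding nbhds_def eta_def by auto
        then have "U \<in> nbhds \<tau> a" using L0_nbhds_eq[OF assms(1) False] by simp
        then show ?thesis unfolding nbhds_def by auto
      qed
    qed
  qed auto
  moreover have "\<Union>{V \<in> \<tau>. V \<subseteq> U} \<in> \<tau>"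
    by (rule topo_Union[OF L0_topo[OF assms(1)]]) auto
  ultimately show ?thesis by simp
qed

lemma L0_open0: "\<tau> \<in> L0 \<Longrightarrow> open U \<Longrightarrow> 0 \<notin> U \<Longrightarrow> U \<in> \<tau>"
  using L0_openI by blast

lemma in_L0:
  assumes t1: "\<tau>1 \<in> L0" and t2: "\<tau>2 \<in> L0" and top: "istopology (\<lambda>U. U \<in> \<sigma>)"
    and U: "UNIV \<in> \<sigma>" and s1: "\<tau>1 \<subseteq> \<sigma>" and s2: "\<sigma> \<subseteq> \<tau>2"
  shows "\<sigma> \<in> L0"
proof -
  have H1: "Hausdorff_space (top_of \<tau>1)" using t1 by (simp add: L0_def Lfam_def)
  have tp: "topspace (top_of \<sigma>) = UNIV"
    using openin_subset[of "top_of \<sigma>" UNIV] top U by auto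
  have tp1: "topspace (top_of \<tau>1) = UNIV"
    using openin_subset[of "top_of \<tau>1" UNIV] L0_topo[OF t1] L0_UNIV[OF t1] by auto
  have H: "Hausdorff_space (top_of \<sigma>)"
  proof (rule Hausdorff_space_expansive[OF H1])
    show "topspace (top_of \<tau>1) = topspace (top_of \<sigma>)" using tp tp1 by simp
    fix U assume "openin (top_of \<tau>1) U"
    hence "U \<in> \<tau>1" using L0_topo[OF t1] by simp
    thus "openin (top_of \<sigma>) U" using s1 top by auto
  qed
  have E: "\<sigma> \<subseteq> eta" using s2 L0_eta[OF t2] by auto
  have C: "Cset \<sigma> \<subseteq> {0}"
  proof
    fix a assume "a \<in> Cset \<sigma>"
    hence ne: "nbhds \<sigma> a \<noteq> nbhds eta a" by (simp add: Cset_def)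
    show "a \<in> {0}"
    proof (rule ccontr)
      assume "a \<notin> {0}"
      hence "nbhds \<tau>1 a = nbhds eta a" using L0_nbhds_eq[OF t1] by auto
      moreover have "nbhds \<tau>1 a \<subseteq> nbhds \<sigma> a" "nbhds \<sigma> a \<subseteq> nbhds eta a"
        using nbhds_mono s1 E by auto
      ultimately show False using ne by auto
    qed
  qed
  show ?thesis unfolding L0_def Lfam_def using top U H E C by blast
qed

lemma L0starI:
  assumes t: "\<tau> \<in> L0" and c: "countable C" and Cn: "C \<subseteq> nbhds \<tau> 0"
    and base: "\<And>V. V \<in> nbhds \<tau> 0 \<Longrightarrow> \<exists>c\<in>C. c \<subseteq> V"
  shows "\<tau> \<in> L0star"
proof -
  have top: "istopology (\<lambda>U. U \<in> \<tau>)" by (rule L0_topo[OF t])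
  have "UNIV \<in> nbhds \<tau> 0" using L0_UNIV[OF t] by (auto simp: nbhds_def)
  then obtain c0 where "c0 \<in> C" using base by blast
  hence ne: "C \<noteq> {}" by auto
  have emp: "{} \<notin> C" using Cn by (auto simp: nbhds_def)
  have dir: "\<forall>b1\<in>C. \<forall>b2\<in>C. \<exists>b3\<in>C. b3 \<subseteq> b1 \<inter> b2"
  proof (intro ballI)
    fix b1 b2 assume "b1 \<in> C" "b2 \<in> C"
    hence "b1 \<in> nbhds \<tau> 0" "b2 \<in> nbhds \<tau> 0" using Cn by auto
    then obtain U1 U2 where "U1 \<in> \<tau>" "U2 \<in> \<tau>" "0 \<in> U1" "0 \<in> U2" "U1 \<subseteq> b1" "U2 \<subseteq> b2"
      unfolding nbhds_def by blast
    moreover have "U1 \<inter> U2 \<in> \<tau>" using topo_Int[OF top] calculation by blast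
    ultimately have "b1 \<inter> b2 \<in> nbhds \<tau> 0" unfolding nbhds_def by blast
    thus "\<exists>b3\<in>C. b3 \<subseteq> b1 \<inter> b2" using base by blast
  qed
  have F: "nbhds \<tau> 0 = {A. \<exists>b\<in>C. b \<subseteq> A}"
  proof
    show "nbhds \<tau> 0 \<subseteq> {A. \<exists>b\<in>C. b \<subseteq> A}" using base by blast
    show "{A. \<exists>b\<in>C. b \<subseteq> A} \<subseteq> nbhds \<tau> 0"
    proof
      fix A assume "A \<in> {A. \<exists>b\<in>C. b \<subseteq> A}"
      then obtain b where "b \<in> C" "b \<subseteq> A" by blast
      hence "b \<in> nbhds \<tau> 0" using Cn by auto
      thus "A \<in> nbhds \<tau> 0" using \<open>b \<subseteq> A\<close> unfolding nbhds_def by blast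
    qed
  qed
  have cb: "countably_based_filter (nbhds \<tau> 0)"
    unfolding countably_based_filter_def by (rule exI[of _ C]) (use c ne emp dir F in simp)
  have "nbhds \<tau> 0 \<subseteq> nbhds eta 0" by (rule nbhds_mono[OF L0_eta[OF t]])
  hence "nbhds \<tau> 0 = nbhds eta 0 \<inter> nbhds \<tau> 0" by auto
  thus ?thesis unfolding L0star_def using t cb by blast
qed

lemma L0star_base:
  assumes t: "\<tau> \<in> L0star"
  shows "\<exists>Ob. (\<forall>n::nat. Ob n \<in> \<tau> \<and> 0 \<in> Ob n) \<and> (\<forall>V\<in>nbhds \<tau> 0. \<exists>m. \<forall>n\<ge>m. Ob n \<subseteq> V)"
proof -
  have tL: "\<tau> \<in> L0" using t by (simp add: L0star_def)
  obtain F where cF: "countably_based_filter F" and NF: "nbhds \<tau> 0 = nbhds eta 0 \<inter> F"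
    using t by (auto simp: L0star_def)
  obtain B where Bc: "countable B" and Bne: "B \<noteq> {}"
    and Bd: "\<forall>b1\<in>B. \<forall>b2\<in>B. \<exists>b3\<in>B. b3 \<subseteq> b1 \<inter> b2" and FB: "F = {A. \<exists>b\<in>B. b \<subseteq> A}"
    using cF unfolding countably_based_filter_def by auto
  define c where "c = from_nat_into B"
  have cB: "c n \<in> B" for n using Bne by (simp add: c_def from_nat_into)
  have "\<exists>b. \<forall>n. (b n \<in> B \<and> b n \<subseteq> c n) \<and> b (Suc n) \<subseteq> b n"
  proof (rule dependent_nat_choice)
    show "\<exists>x. x \<in> B \<and> x \<subseteq> c 0" using cB by blast
    fix x n assume "x \<in> B \<and> x \<subseteq> c n"
    then obtain y where "y \<in> B" "y \<subseteq> x \<inter> c (Suc n)" using Bd cB by blast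
    thus "\<exists>y. (y \<in> B \<and> y \<subseteq> c (Suc n)) \<and> y \<subseteq> x" by blast
  qed
  then obtain b where bB: "\<And>n. b n \<in> B" and bc: "\<And>n. b n \<subseteq> c n" and bS: "\<And>n. b (Suc n) \<subseteq> b n"
    by blast
  have bdec: "m \<le> n \<Longrightarrow> b n \<subseteq> b m" for m n
    using decseqD[OF decseq_SucI[of b, OF bS]] by blast
  have ex: "\<forall>n. \<exists>U. U \<in> \<tau> \<and> 0 \<in> U \<and> U \<subseteq> b n \<union> ball 0 (1 / (real n + 1))"
  proof
    fix n
    have "b n \<union> ball 0 (1 / (real n + 1)) \<in> nbhds eta 0"
      using nbhds_eta_ball[of "1 / (real n + 1)" 0] unfolding nbhds_def by auto
    moreover have "b n \<union> ball 0 (1 / (real n + 1)) \<in> F" using bB FB by auto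
    ultimately have "b n \<union> ball 0 (1 / (real n + 1)) \<in> nbhds \<tau> 0" using NF by auto
    thus "\<exists>U. U \<in> \<tau> \<and> 0 \<in> U \<and> U \<subseteq> b n \<union> ball 0 (1 / (real n + 1))"
      unfolding nbhds_def by blast
  qed
  obtain Ob where Ob0: "\<forall>n. Ob n \<in> \<tau> \<and> 0 \<in> Ob n \<and> Ob n \<subseteq> b n \<union> ball 0 (1 / (real n + 1))"
    using choice[OF ex] by blast
  hence Ob: "\<And>n. Ob n \<in> \<tau>" "\<And>n. 0 \<in> Ob n"
    "\<And>n. Ob n \<subseteq> b n \<union> ball 0 (1 / (real n + 1))" by auto
  have base: "\<forall>V\<in>nbhds \<tau> 0. \<exists>m. \<forall>n\<ge>m. Ob n \<subseteq> V"
  proof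
    fix V assume V: "V \<in> nbhds \<tau> 0"
    hence "V \<in> F" "V \<in> nbhds eta 0" using NF by auto
    then obtain b0 e where b0: "b0 \<in> B" "b0 \<subseteq> V" and e: "e > 0" "ball 0 e \<subseteq> V"
      using FB nbhds_etaD[of V 0] by auto
    obtain i where i: "c i = b0" using from_nat_into_surj[OF Bc b0(1)] c_def by auto
    obtain k :: nat where k: "1 / e < real k" using reals_Archimedean2 by blast
    have "Ob n \<subseteq> V" if n: "n \<ge> max i k" for n
    proof -
      have "b n \<subseteq> b0" using bdec[of i n] bc[of i] i n by auto
      moreover have "1 / (real n + 1) \<le> e"
      proof -
        have "real k \<le> real n" using n by simp
        hence "1 / e < real n + 1" using k by simp
        thus ?thesis using e(1) by (smt (verit, ccfv_SIG) divide_less_eq mult.commute mult_imp_div_pos_le of_nat_0_le_iff)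
      qed
      hence "ball 0 (1 / (real n + 1)) \<subseteq> ball (0::real) e" by (rule subset_ball)
      ultimately show ?thesis using Ob(3)[of n] b0 e by blast
    qed
    thus "\<exists>m. \<forall>n\<ge>m. Ob n \<subseteq> V" by blast
  qed
  show ?thesis by (rule exI[of _ Ob]) (use Ob0 base in simp)
qed


lemma far_point:
  fixes Ob :: "nat \<Rightarrow> real set" and n :: nat
  assumes t1: "\<tau>1 \<in> L0" and W: "0 \<in> W" "open W" "W \<notin> nbhds \<tau>1 0"
    and Ob: "\<And>n. Ob n \<in> \<tau>1" "\<And>n. 0 \<in> Ob n"
    and Obb: "\<And>V. V \<in> nbhds \<tau>1 0 \<Longrightarrow> \<exists>m. \<forall>n\<ge>m. Ob n \<subseteq> V"
  shows "\<exists>y \<rho>. \<rho> > 0 \<and> \<bar>y\<bar> > M \<and> y \<notin> W \<and> (\<exists>k\<ge>n. ball y \<rho> \<subseteq> Ob k)"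
proof -
  have top: "istopology (\<lambda>U. U \<in> \<tau>1)" by (rule L0_topo[OF t1])
  define K where "K = cball (0::real) M - W"
  have cK: "compact K" unfolding K_def using W(2) by (simp add: compact_diff)
  have H: "Hausdorff_space (top_of \<tau>1)" using t1 by (simp add: L0_def Lfam_def)
  have tp1: "topspace (top_of \<tau>1) = UNIV"
    using openin_subset[of "top_of \<tau>1" UNIV] top L0_UNIV[OF t1] by auto
  have "\<forall>p\<in>K. \<exists>UV. fst UV \<in> \<tau>1 \<and> snd UV \<in> \<tau>1 \<and> 0 \<in> fst UV \<and> p \<in> snd UV \<and> fst UV \<inter> snd UV = {}"
  proof
    fix p assume "p \<in> K"
    hence "p \<noteq> 0" using W(1) K_def by auto
    have "\<exists>U V. openin (top_of \<tau>1) U \<and> openin (top_of \<tau>1) V \<and> 0 \<in> U \<and> p \<in> V \<and> disjnt U V"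
      using H tp1 \<open>p \<noteq> 0\<close> unfolding Hausdorff_space_def by simp
    then obtain U V where "openin (top_of \<tau>1) U" "openin (top_of \<tau>1) V" "0 \<in> U" "p \<in> V" "disjnt U V"
      by blast
    thus "\<exists>UV. fst UV \<in> \<tau>1 \<and> snd UV \<in> \<tau>1 \<and> 0 \<in> fst UV \<and> p \<in> snd UV \<and> fst UV \<inter> snd UV = {}"
      using top by (intro exI[of _ "(U,V)"]) (simp add: disjnt_def)
  qed
  then obtain UV where UV: "\<And>p. p \<in> K \<Longrightarrow> fst (UV p) \<in> \<tau>1 \<and> snd (UV p) \<in> \<tau>1 \<and> 0 \<in> fst (UV p) \<and> p \<in> snd (UV p) \<and> fst (UV p) \<inter> snd (UV p) = {}"
    by metis
  have opV: "open (snd (UV p))" if "p \<in> K" for p using UV[OF that] L0_open[OF t1] by blast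
  have cov: "K \<subseteq> (\<Union>p\<in>K. snd (UV p))" using UV by blast
  obtain C' where C': "C' \<subseteq> K" "finite C'" "K \<subseteq> (\<Union>p\<in>C'. snd (UV p))"
    using compactE_image[OF cK opV cov] by blast
  define U0 where "U0 = \<Inter>(insert UNIV ((\<lambda>p. fst (UV p)) ` C'))"
  have "openin (top_of \<tau>1) U0" unfolding U0_def
  proof (rule openin_Inter)
    show "finite (insert UNIV ((\<lambda>p. fst (UV p)) ` C'))" using C'(2) by simp
    show "insert UNIV ((\<lambda>p. fst (UV p)) ` C') \<noteq> {}" by simp
    fix X assume "X \<in> insert UNIV ((\<lambda>p. fst (UV p)) ` C')"
    thus "openin (top_of \<tau>1) X" using top L0_UNIV[OF t1] UV C'(1) by auto
  qed
  hence U0t: "U0 \<in> \<tau>1" using top by simp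
  have U00: "0 \<in> U0" unfolding U0_def using UV C'(1) by auto
  have U0K: "U0 \<inter> K = {}"
  proof -
    { fix z assume z: "z \<in> U0" "z \<in> K"
      then obtain p where p: "p \<in> C'" "z \<in> snd (UV p)" using C'(3) by blast
      hence "z \<in> fst (UV p)" using z(1) unfolding U0_def by auto
      hence False using UV[of p] p C'(1) by auto }
    thus ?thesis by blast
  qed
  obtain m where m: "\<forall>n'\<ge>m. Ob n' \<subseteq> U0" using Obb[OF nbhds_mem[OF U0t U00]] by blast
  define k where "k = max n m"
  have "\<not> Ob k \<subseteq> W"
  proof
    assume "Ob k \<subseteq> W"
    hence "W \<in> nbhds \<tau>1 0" unfolding nbhds_def using Ob by blast
    thus False using W(3) by simp
  qed
  then obtain y where y: "y \<in> Ob k" "y \<notin> W" by blast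
  have "Ob k \<subseteq> U0" using m k_def by auto
  hence "y \<notin> K" using y U0K by blast
  hence yM: "\<bar>y\<bar> > M" using y(2) unfolding K_def by (auto simp: dist_real_def)
  have "open (Ob k)" using L0_open[OF t1 Ob(1)] .
  then obtain \<rho> where "\<rho> > 0" "ball y \<rho> \<subseteq> Ob k" using y(1) open_contains_ball by blast
  moreover have "k \<ge> n" by (simp add: k_def)
  ultimately have "\<rho> > 0 \<and> \<bar>y\<bar> > M \<and> y \<notin> W \<and> (\<exists>k\<ge>n. ball y \<rho> \<subseteq> Ob k)"
    using yM y(2) by blast
  thus ?thesis by blast
qed


lemma spacing:
  fixes x :: "nat \<Rightarrow> real"
  assumes "\<And>n. \<bar>x (Suc n)\<bar> > \<bar>x n\<bar> + 1"
  shows "m < n \<Longrightarrow> \<bar>x n\<bar> > \<bar>x m\<bar> + 1"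
proof (induction n)
  case 0 thus ?case by simp
next
  case (Suc n)
  show ?case
  proof (cases "m = n")
    case True thus ?thesis using assms by simp
  next
    case False
    hence "m < n" using Suc.prems by simp
    thus ?thesis using Suc.IH assms[of n] by linarith
  qed
qed

lemma setup_seq:
  assumes t1: "\<tau>1 \<in> L0star" and t2: "\<tau>2 \<in> L0" and sub: "\<tau>1 \<subset> \<tau>2"
  shows "\<exists>W \<delta> x r. W \<in> \<tau>2 \<and> 0 \<in> W \<and> \<delta> > 0 \<and> ball 0 \<delta> \<subseteq> W \<and>
     (\<forall>n::nat. 0 < r n \<and> r n \<le> 1/4 \<and> r n \<le> \<delta>/4 \<and> x n \<notin> W) \<and>
     (\<forall>m n. m \<noteq> n \<longrightarrow> 1 < \<bar>x m - x n\<bar>) \<and>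
     (\<forall>V\<in>nbhds \<tau>1 0. \<exists>m. \<forall>n\<ge>m. ball (x n) (r n) \<subseteq> V)"
proof -
  have t1L: "\<tau>1 \<in> L0" using t1 by (simp add: L0star_def)
  obtain W where W: "W \<in> \<tau>2" "W \<notin> \<tau>1" using sub by blast
  have oW: "open W" using L0_open[OF t2 W(1)] .
  have W0: "0 \<in> W" using L0_open0[OF t1L oW] W(2) by blast
  have Wn: "W \<notin> nbhds \<tau>1 0" using L0_openI[OF t1L oW] W(2) by blast
  obtain \<delta> where d: "\<delta> > 0" "ball 0 \<delta> \<subseteq> W" using oW W0 open_contains_ball by blast
  obtain Ob :: "nat \<Rightarrow> real set" where Ob: "\<And>n. Ob n \<in> \<tau>1" "\<And>n. 0 \<in> Ob n"
    and Obb: "\<And>V. V \<in> nbhds \<tau>1 0 \<Longrightarrow> \<exists>m. \<forall>n\<ge>m. Ob n \<subseteq> V"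
    using L0star_base[OF t1] by blast
  note fp = far_point[OF t1L W0 oW Wn Ob Obb]
  have "\<exists>f. \<forall>n. (snd (f n) > 0 \<and> fst (f n) \<notin> W \<and> (\<exists>k\<ge>n. ball (fst (f n)) (snd (f n)) \<subseteq> Ob k))
           \<and> \<bar>fst (f (Suc n))\<bar> > \<bar>fst (f n)\<bar> + 1"
  proof (rule dependent_nat_choice)
    obtain y \<rho> where "\<rho> > 0 \<and> \<bar>y\<bar> > 0 \<and> y \<notin> W \<and> (\<exists>k\<ge>0. ball y \<rho> \<subseteq> Ob k)"
      using fp[of 0 0] by blast
    thus "\<exists>p. snd p > 0 \<and> fst p \<notin> W \<and> (\<exists>k\<ge>0. ball (fst p) (snd p) \<subseteq> Ob k)"
      by (intro exI[of _ "(y,\<rho>)"]) simp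
  next
    fix p :: "real \<times> real" and n
    obtain y \<rho> where "\<rho> > 0 \<and> \<bar>y\<bar> > \<bar>fst p\<bar> + 1 \<and> y \<notin> W \<and> (\<exists>k\<ge>Suc n. ball y \<rho> \<subseteq> Ob k)"
      using fp[of "\<bar>fst p\<bar> + 1" "Suc n"] by blast
    thus "\<exists>q. (snd q > 0 \<and> fst q \<notin> W \<and> (\<exists>k\<ge>Suc n. ball (fst q) (snd q) \<subseteq> Ob k)) \<and>
              \<bar>fst q\<bar> > \<bar>fst p\<bar> + 1"
      by (intro exI[of _ "(y,\<rho>)"]) simp
  qed
  then obtain f where f: "\<And>n. snd (f n) > 0" "\<And>n. fst (f n) \<notin> W"
    "\<And>n. \<exists>k\<ge>n. ball (fst (f n)) (snd (f n)) \<subseteq> Ob k"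
    "\<And>n. \<bar>fst (f (Suc n))\<bar> > \<bar>fst (f n)\<bar> + 1" by blast
  define x where "x n = fst (f n)" for n
  define r where "r n = min (snd (f n)) (min (1/4) (\<delta>/4))" for n
  have r: "\<forall>n. 0 < r n \<and> r n \<le> 1/4 \<and> r n \<le> \<delta>/4 \<and> x n \<notin> W"
    using f(1,2) d(1) unfolding r_def x_def by auto
  have sp: "\<forall>m n. m \<noteq> n \<longrightarrow> 1 < \<bar>x m - x n\<bar>"
  proof (intro allI impI)
    fix m n :: nat assume "m \<noteq> n"
    hence "m < n \<or> n < m" by arith
    moreover have "\<And>a b. a < b \<Longrightarrow> \<bar>x b\<bar> > \<bar>x a\<bar> + 1"
      using spacing[of x] f(4) unfolding x_def by blast
    ultimately show "1 < \<bar>x m - x n\<bar>" by (smt (verit))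
  qed
  have bb: "\<forall>V\<in>nbhds \<tau>1 0. \<exists>m. \<forall>n\<ge>m. ball (x n) (r n) \<subseteq> V"
  proof
    fix V assume "V \<in> nbhds \<tau>1 0"
    then obtain m where m: "\<forall>n\<ge>m. Ob n \<subseteq> V" using Obb by blast
    have "ball (x n) (r n) \<subseteq> V" if "n \<ge> m" for n
    proof -
      obtain k where k: "k \<ge> n" "ball (x n) (snd (f n)) \<subseteq> Ob k" using f(3)[of n] x_def by auto
      have "ball (x n) (r n) \<subseteq> ball (x n) (snd (f n))" by (rule subset_ball) (simp add: r_def)
      moreover have "Ob k \<subseteq> V" using m k(1) that by auto
      ultimately show ?thesis using k(2) by blast
    qed
    thus "\<exists>m. \<forall>n\<ge>m. ball (x n) (r n) \<subseteq> V" by blast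
  qed
  show ?thesis
    apply (rule exI[of _ W], rule exI[of _ \<delta>], rule exI[of _ x], rule exI[of _ r])
    using W(1) W0 d r sp bb by blast
qed


definition tfam :: "real set set \<Rightarrow> (nat \<Rightarrow> real set) \<Rightarrow> nat set set \<Rightarrow> real set set" where
  "tfam \<tau> J \<A> = {U \<in> \<tau>. 0 \<in> U \<longrightarrow> (\<forall>A\<in>\<A>. \<exists>k. \<forall>n\<in>A. k \<le> n \<longrightarrow> J n \<subseteq> U)}"

lemma tfam_topo:
  assumes top: "istopology (\<lambda>U. U \<in> \<tau>)"
  shows "istopology (\<lambda>U. U \<in> tfam \<tau> J \<A>)"
  unfolding istopology_def
proof (intro conjI allI impI)
  fix S T assume S: "S \<in> tfam \<tau> J \<A>" and T: "T \<in> tfam \<tau> J \<A>"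
  have "S \<inter> T \<in> \<tau>" using S T topo_Int[OF top] unfolding tfam_def by blast
  moreover have "\<exists>k. \<forall>n\<in>A. k \<le> n \<longrightarrow> J n \<subseteq> S \<inter> T" if h: "0 \<in> S \<inter> T" "A \<in> \<A>" for A
  proof -
    obtain k1 where k1: "\<forall>n\<in>A. k1 \<le> n \<longrightarrow> J n \<subseteq> S" using S h unfolding tfam_def by blast
    obtain k2 where k2: "\<forall>n\<in>A. k2 \<le> n \<longrightarrow> J n \<subseteq> T" using T h unfolding tfam_def by blast
    have "\<forall>n\<in>A. max k1 k2 \<le> n \<longrightarrow> J n \<subseteq> S \<inter> T" using k1 k2 by simp
    thus ?thesis by blast
  qed
  ultimately show "S \<inter> T \<in> tfam \<tau> J \<A>" unfolding tfam_def by blast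
next
  fix K assume K: "\<forall>S\<in>K. S \<in> tfam \<tau> J \<A>"
  have "\<Union>K \<in> \<tau>" using K topo_Union[OF top] unfolding tfam_def by blast
  moreover have "\<exists>k. \<forall>n\<in>A. k \<le> n \<longrightarrow> J n \<subseteq> \<Union>K" if h: "0 \<in> \<Union>K" "A \<in> \<A>" for A
  proof -
    obtain S where S: "S \<in> K" "0 \<in> S" using h by blast
    then obtain k where k: "\<forall>n\<in>A. k \<le> n \<longrightarrow> J n \<subseteq> S" using K h unfolding tfam_def by blast
    thus ?thesis using S by blast
  qed
  ultimately show "\<Union>K \<in> tfam \<tau> J \<A>" unfolding tfam_def by blast
qed

lemma tfam_UNIV: "UNIV \<in> \<tau> \<Longrightarrow> UNIV \<in> tfam \<tau> J \<A>"
  unfolding tfam_def by blast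

lemma tfam_sub: "tfam \<tau> J \<A> \<subseteq> \<tau>"
  unfolding tfam_def by blast

lemma tfam_sup:
  assumes "\<tau>1 \<subseteq> \<tau>" and bb: "\<And>V. V \<in> nbhds \<tau>1 0 \<Longrightarrow> \<exists>m. \<forall>n\<ge>m. J n \<subseteq> V"
  shows "\<tau>1 \<subseteq> tfam \<tau> J \<A>"
proof
  fix U assume U: "U \<in> \<tau>1"
  have "\<exists>k. \<forall>n\<in>A. k \<le> n \<longrightarrow> J n \<subseteq> U" if h: "0 \<in> U" for A
  proof -
    obtain m where "\<forall>n\<ge>m. J n \<subseteq> U" using bb[OF nbhds_mem[OF U h]] by blast
    thus ?thesis by blast
  qed
  thus "U \<in> tfam \<tau> J \<A>" using U assms(1) unfolding tfam_def by blast
qed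

lemma tfam_L0:
  assumes t1: "\<tau>1 \<in> L0" and t2: "\<tau>2 \<in> L0" and t12: "\<tau>1 \<subseteq> \<tau>2"
    and bb: "\<And>V. V \<in> nbhds \<tau>1 0 \<Longrightarrow> \<exists>m. \<forall>n\<ge>m. J n \<subseteq> V"
  shows "tfam \<tau>2 J \<A> \<in> L0" "\<tau>1 \<subseteq> tfam \<tau>2 J \<A>" "tfam \<tau>2 J \<A> \<subseteq> \<tau>2"
proof -
  show s1: "\<tau>1 \<subseteq> tfam \<tau>2 J \<A>" by (rule tfam_sup[OF t12 bb])
  show s2: "tfam \<tau>2 J \<A> \<subseteq> \<tau>2" by (rule tfam_sub)
  show "tfam \<tau>2 J \<A> \<in> L0"
    by (rule in_L0[OF t1 t2 tfam_topo[OF L0_topo[OF t2]] tfam_UNIV[OF L0_UNIV[OF t2]] s1 s2])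
qed

lemma tfam_L0star:
  assumes t1: "\<tau>1 \<in> L0" and t2: "\<tau>2 \<in> L0star" and t12: "\<tau>1 \<subseteq> \<tau>2"
    and bb: "\<And>V. V \<in> nbhds \<tau>1 0 \<Longrightarrow> \<exists>m. \<forall>n\<ge>m. J n \<subseteq> V"
    and Jo: "\<And>n. open (J n)" and J0: "\<And>n. 0 \<notin> J n"
  shows "tfam \<tau>2 J {A} \<in> L0star"
proof -
  have t2L: "\<tau>2 \<in> L0" using t2 by (simp add: L0star_def)
  have top2: "istopology (\<lambda>U. U \<in> \<tau>2)" by (rule L0_topo[OF t2L])
  let ?s = "tfam \<tau>2 J {A}"
  have sL: "?s \<in> L0" using tfam_L0[OF t1 t2L t12 bb] by blast
  obtain P :: "nat \<Rightarrow> real set" where P: "\<And>n. P n \<in> \<tau>2" "\<And>n. 0 \<in> P n"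
    and Pb: "\<And>V. V \<in> nbhds \<tau>2 0 \<Longrightarrow> \<exists>m. \<forall>n\<ge>m. P n \<subseteq> V"
    using L0star_base[OF t2] by blast
  define E where "E k = \<Union>(J ` {n \<in> A. k \<le> n})" for k
  define C where "C = (\<lambda>(j,k). P j \<union> E k) ` (UNIV :: (nat \<times> nat) set)"
  have cC: "countable C" unfolding C_def by simp
  have Es: "E k \<in> \<tau>2" for k
  proof (rule L0_open0[OF t2L])
    show "open (E k)" unfolding E_def using Jo by auto
    show "0 \<notin> E k" unfolding E_def using J0 by auto
  qed
  have Cs: "C \<subseteq> nbhds ?s 0"
  proof
    fix c assume "c \<in> C"
    then obtain j k where c: "c = P j \<union> E k" unfolding C_def by auto
    have "c \<in> \<tau>2" unfolding c by (rule topo_Un[OF top2 P(1) Es])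
    moreover have "\<forall>n\<in>A. k \<le> n \<longrightarrow> J n \<subseteq> c" unfolding c E_def by blast
    ultimately have "c \<in> ?s" unfolding tfam_def by blast
    moreover have "0 \<in> c" using P(2) c by blast
    ultimately show "c \<in> nbhds ?s 0" by (rule nbhds_mem)
  qed
  have base: "\<exists>c\<in>C. c \<subseteq> V" if V: "V \<in> nbhds ?s 0" for V
  proof -
    obtain U where U: "U \<in> ?s" "0 \<in> U" "U \<subseteq> V" using V unfolding nbhds_def by blast
    have "U \<in> \<tau>2" using U(1) unfolding tfam_def by blast
    then obtain m where m: "\<forall>n\<ge>m. P n \<subseteq> U" using Pb[OF nbhds_mem[OF _ U(2)]] by blast
    obtain k where k: "\<forall>n\<in>A. k \<le> n \<longrightarrow> J n \<subseteq> U" using U(1,2) unfolding tfam_def by blast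
    have "P m \<union> E k \<subseteq> U" using m k unfolding E_def by blast
    moreover have "P m \<union> E k \<in> C" unfolding C_def by blast
    ultimately show ?thesis using U(3) by blast
  qed
  show ?thesis by (rule L0starI[OF sL cC Cs base])
qed


definition qr :: "nat \<Rightarrow> real" where "qr = from_nat_into \<rat>"

lemma qr_dense: "(a::real) < b \<Longrightarrow> \<exists>i. a < qr i \<and> qr i < b"
proof -
  assume "a < b"
  then obtain q where q: "q \<in> \<rat>" "a < q" "q < b" using Rats_dense_in_real by blast
  obtain i where "from_nat_into \<rat> i = q" using from_nat_into_surj[OF countable_rat q(1)] by blast
  thus ?thesis using q unfolding qr_def by blast
qed

definition Ch :: "real \<Rightarrow> nat set" where
  "Ch r = {prod_encode (i,j) | i j. qr i < r}"

lemma Ch_mono: "r \<le> s \<Longrightarrow> Ch r \<subseteq> Ch s"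
  unfolding Ch_def by force

lemma Ch_inf: assumes "r < s" shows "infinite (Ch s - Ch r)"
proof -
  obtain i where i: "r < qr i" "qr i < s" using qr_dense[OF assms] by blast
  have "range (\<lambda>j. prod_encode (i,j)) \<subseteq> Ch s - Ch r"
  proof
    fix n assume "n \<in> range (\<lambda>j. prod_encode (i,j))"
    then obtain j where n: "n = prod_encode (i,j)" by blast
    have "n \<in> Ch s" unfolding n Ch_def using i by blast
    moreover have "n \<notin> Ch r"
    proof
      assume "n \<in> Ch r"
      then obtain i' j' where "n = prod_encode (i',j')" "qr i' < r" unfolding Ch_def by blast
      hence "i' = i" using n prod_encode_eq by auto
      thus False using i \<open>qr i' < r\<close> by simp
    qed
    ultimately show "n \<in> Ch s - Ch r" by blast
  qed
  moreover have "infinite (range (\<lambda>j. prod_encode (i,j)))"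
    by (rule range_inj_infinite) (auto simp: inj_def prod_encode_eq)
  ultimately show ?thesis using finite_subset by blast
qed

definition ebr :: "real \<Rightarrow> nat \<Rightarrow> bool" where "ebr r = (\<lambda>i. qr i < r)"

lemma ebr_inj: "inj ebr"
proof (rule injI)
  fix r s assume eq: "ebr r = ebr s"
  show "r = s"
  proof (rule ccontr)
    assume "r \<noteq> s"
    hence "r < s \<or> s < r" by arith
    then obtain i where "(r < qr i \<and> qr i < s) \<or> (s < qr i \<and> qr i < r)" using qr_dense by blast
    hence "ebr r i \<noteq> ebr s i" unfolding ebr_def by auto
    thus False using eq by simp
  qed
qed

definition e2 :: "real \<times> bool \<Rightarrow> nat \<Rightarrow> bool" where
  "e2 p = (\<lambda>i. case i of 0 \<Rightarrow> snd p | Suc i' \<Rightarrow> ebr (fst p) i')"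

lemma e2_inj: "inj e2"
proof (rule injI)
  fix p q assume eq: "e2 p = e2 q"
  have "snd p = snd q" using fun_cong[OF eq, of 0] by (simp add: e2_def)
  moreover have "ebr (fst p) = ebr (fst q)"
    using eq by (auto simp: e2_def fun_eq_iff dest: spec[of _ "Suc _"])
  hence "fst p = fst q" using ebr_inj by (simp add: inj_eq)
  ultimately show "p = q" by (simp add: prod_eq_iff)
qed

definition Br :: "(nat \<Rightarrow> bool) \<Rightarrow> nat set" where
  "Br d = range (\<lambda>k. 2 * to_nat (map d [0..<k]) + 1)"

lemma Br_inf: "infinite (Br d)"
  unfolding Br_def
proof (rule range_inj_infinite, rule injI)
  fix a b assume "2 * to_nat (map d [0..<a]) + 1 = 2 * to_nat (map d [0..<b]) + (1::nat)"
  hence "to_nat (map d [0..<a]) = to_nat (map d [0..<b])" by simp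
  hence "map d [0..<a] = map d [0..<b]" by simp
  hence "length (map d [0..<a]) = length (map d [0..<b])" by simp
  thus "a = b" by simp
qed

lemma Br_ad: assumes "d \<noteq> d'" shows "finite (Br d \<inter> Br d')"
proof -
  obtain i where i: "d i \<noteq> d' i" using assms by auto
  have "Br d \<inter> Br d' \<subseteq> (\<lambda>k. 2 * to_nat (map d [0..<k]) + 1) ` {..i}"
  proof
    fix n assume "n \<in> Br d \<inter> Br d'"
    then obtain k k' where n: "n = 2 * to_nat (map d [0..<k]) + 1" "n = 2 * to_nat (map d' [0..<k']) + 1"
      unfolding Br_def by blast
    hence "to_nat (map d [0..<k]) = to_nat (map d' [0..<k'])" by simp
    hence eq: "map d [0..<k] = map d' [0..<k']" by simp
    have "length (map d [0..<k]) = length (map d' [0..<k'])" using eq by simp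
    hence "k = k'" by simp
    have "k \<le> i"
    proof (rule ccontr)
      assume "\<not> k \<le> i"
      hence "i < k" by simp
      hence "map d [0..<k] ! i = d i" "map d' [0..<k'] ! i = d' i" using \<open>k = k'\<close> by auto
      thus False using eq i by simp
    qed
    thus "n \<in> (\<lambda>k. 2 * to_nat (map d [0..<k]) + 1) ` {..i}" using n(1) by blast
  qed
  thus ?thesis using finite_subset by blast
qed

definition Col :: "nat \<Rightarrow> nat set" where
  "Col j = range (\<lambda>i. 2 * prod_encode (j,i))"

lemma Col_inf: "infinite (Col j)"
  unfolding Col_def by (rule range_inj_infinite) (auto simp: inj_def prod_encode_eq)

lemma Col_disj: "j \<noteq> j' \<Longrightarrow> Col j \<inter> Col j' = {}"
  unfolding Col_def by (auto simp: prod_encode_eq)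

lemma Col_Br: "Col j \<inter> Br d = {}"
  unfolding Col_def Br_def by auto presburger


locale setting =
  fixes \<tau>1 \<tau>2 :: "real set set" and W :: "real set" and \<delta> :: real and x r :: "nat \<Rightarrow> real"
  assumes t1: "\<tau>1 \<in> L0star" and t2: "\<tau>2 \<in> L0" and t12: "\<tau>1 \<subseteq> \<tau>2"
    and W: "W \<in> \<tau>2" "0 \<in> W" and d: "\<delta> > 0" "ball 0 \<delta> \<subseteq> W"
    and r: "\<And>n. 0 < r n" "\<And>n. r n \<le> 1/4" "\<And>n. r n \<le> \<delta>/4" and xW: "\<And>n. x n \<notin> W"
    and sp: "\<And>m n. m \<noteq> n \<Longrightarrow> 1 < \<bar>x m - x n\<bar>"
    and bb: "\<And>V. V \<in> nbhds \<tau>1 0 \<Longrightarrow> \<exists>m. \<forall>n\<ge>m. ball (x n) (r n) \<subseteq> V"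
begin

lemma t1L: "\<tau>1 \<in> L0" using t1 by (simp add: L0star_def)

definition Ib :: "nat \<Rightarrow> real set" where "Ib n = ball (x n) (r n)"

lemma x_big: "\<bar>x n\<bar> \<ge> \<delta>"
proof (rule ccontr)
  assume "\<not> \<bar>x n\<bar> \<ge> \<delta>"
  hence "x n \<in> ball 0 \<delta>" by (simp add: dist_real_def)
  thus False using d xW by blast
qed

lemma Ib_open: "open (Ib n)" by (simp add: Ib_def)

lemma Ib_0: "0 \<notin> Ib n"
  using x_big[of n] r(3)[of n] d(1) by (simp add: Ib_def dist_real_def)

lemma x_Ib: "x n \<in> Ib n"
  using r(1) by (simp add: Ib_def)

lemma x_Ib2: "m \<noteq> n \<Longrightarrow> x m \<notin> Ib n"
  using sp[of m n] r(2)[of n] by (simp add: Ib_def dist_real_def)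

lemma bbI: "V \<in> nbhds \<tau>1 0 \<Longrightarrow> \<exists>m. \<forall>n\<ge>m. Ib n \<subseteq> V"
  using bb unfolding Ib_def .

lemma tf_L0: "tfam \<tau>2 Ib \<A> \<in> L0" "\<tau>1 \<subseteq> tfam \<tau>2 Ib \<A>" "tfam \<tau>2 Ib \<A> \<subseteq> \<tau>2"
  using tfam_L0[OF t1L t2 t12 bbI] by blast+

lemma tf_L0star: "\<tau>2 \<in> L0star \<Longrightarrow> tfam \<tau>2 Ib {A} \<in> L0star"
  by (rule tfam_L0star[OF t1L _ t12 bbI Ib_open Ib_0])

definition VS :: "nat set \<Rightarrow> real set" where "VS S = W \<union> \<Union>(Ib ` S)"

lemma VS_tau2: "VS S \<in> \<tau>2"
proof -
  have "\<Union>(Ib ` S) \<in> \<tau>2" by (rule L0_open0[OF t2]) (use Ib_open Ib_0 in auto)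
  thus ?thesis unfolding VS_def by (rule topo_Un[OF L0_topo[OF t2] W(1)])
qed

lemma VS_I: "Ib n \<subseteq> VS S \<Longrightarrow> n \<in> S"
proof -
  assume "Ib n \<subseteq> VS S"
  hence "x n \<in> VS S" using x_Ib by blast
  then obtain m where "m \<in> S" "x n \<in> Ib m" using xW unfolding VS_def by blast
  thus "n \<in> S" using x_Ib2 by (cases "m = n") auto
qed

lemma VS_mem: "VS S \<in> tfam \<tau>2 Ib \<A> \<longleftrightarrow> (\<forall>A\<in>\<A>. finite (A - S))"
proof
  assume V: "VS S \<in> tfam \<tau>2 Ib \<A>"
  show "\<forall>A\<in>\<A>. finite (A - S)"
  proof
    fix A assume "A \<in> \<A>"
    then obtain k where k: "\<forall>n\<in>A. k \<le> n \<longrightarrow> Ib n \<subseteq> VS S"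
      using V W(2) unfolding tfam_def VS_def by blast
    have "A - S \<subseteq> {..<k}"
    proof
      fix n assume n: "n \<in> A - S"
      show "n \<in> {..<k}"
      proof (rule ccontr)
        assume "n \<notin> {..<k}"
        hence "Ib n \<subseteq> VS S" using k n by auto
        thus False using VS_I n by blast
      qed
    qed
    thus "finite (A - S)" using finite_subset by blast
  qed
next
  assume F: "\<forall>A\<in>\<A>. finite (A - S)"
  have "\<exists>k. \<forall>n\<in>A. k \<le> n \<longrightarrow> Ib n \<subseteq> VS S" if A: "A \<in> \<A>" for A
  proof -
    obtain k where k: "A - S \<subseteq> {..<k}" using finite_nat_bounded F A by blast
    have "\<forall>n\<in>A. k \<le> n \<longrightarrow> Ib n \<subseteq> VS S"
    proof (intro ballI impI)
      fix n assume "n \<in> A" "k \<le> n"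
      hence "n \<in> S" using k by auto
      thus "Ib n \<subseteq> VS S" unfolding VS_def by blast
    qed
    thus ?thesis by blast
  qed
  thus "VS S \<in> tfam \<tau>2 Ib \<A>" using VS_tau2 unfolding tfam_def by blast
qed

lemma not_sub:
  assumes "\<forall>A\<in>\<A>. finite (A - S)" "A' \<in> \<A>'" "infinite (A' - S)"
  shows "\<not> tfam \<tau>2 Ib \<A> \<subseteq> tfam \<tau>2 Ib \<A>'"
  using VS_mem[of S \<A>] VS_mem[of S \<A>'] assms by blast

end

lemma tfam_anti:
  assumes "\<forall>A'\<in>\<A>'. \<exists>A\<in>\<A>. A' \<subseteq> A"
  shows "tfam \<tau> J \<A> \<subseteq> tfam \<tau> J \<A>'"
proof
  fix U assume U: "U \<in> tfam \<tau> J \<A>"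
  have "\<exists>k. \<forall>n\<in>A'. k \<le> n \<longrightarrow> J n \<subseteq> U" if h: "0 \<in> U" "A' \<in> \<A>'" for A'
  proof -
    obtain A where A: "A \<in> \<A>" "A' \<subseteq> A" using assms h(2) by blast
    then obtain k where "\<forall>n\<in>A. k \<le> n \<longrightarrow> J n \<subseteq> U" using U h(1) unfolding tfam_def by blast
    thus ?thesis using A(2) by blast
  qed
  thus "U \<in> tfam \<tau> J \<A>'" using U unfolding tfam_def by blast
qed


lemma range_eqpoll: "inj (f :: 'a \<Rightarrow> 'b) \<Longrightarrow> range f \<approx> (UNIV :: 'a set)"
proof -
  assume "inj f"
  hence "bij_betw f UNIV (range f)" by (rule inj_on_imp_bij_betw)
  hence "(UNIV :: 'a set) \<approx> range f" unfolding eqpoll_def by blast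
  thus ?thesis by (rule eqpoll_sym)
qed

definition DX :: "real set \<Rightarrow> (real \<times> bool) set" where
  "DX X = (\<lambda>r. (r,True)) ` X \<union> (\<lambda>r. (r,False)) ` (- X)"

definition AX :: "real set \<Rightarrow> nat set set" where
  "AX X = range Col \<union> (\<lambda>p. Br (e2 p)) ` DX X"

lemma DX_diff: "X \<noteq> Y \<Longrightarrow> \<exists>p. p \<in> DX X \<and> p \<notin> DX Y"
proof -
  assume "X \<noteq> Y"
  then obtain r where "(r \<in> X \<and> r \<notin> Y) \<or> (r \<in> Y \<and> r \<notin> X)" by blast
  thus ?thesis
  proof
    assume "r \<in> X \<and> r \<notin> Y"
    hence "(r,True) \<in> DX X" "(r,True) \<notin> DX Y" unfolding DX_def by auto
    thus ?thesis by blast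
  next
    assume "r \<in> Y \<and> r \<notin> X"
    hence "(r,False) \<in> DX X" "(r,False) \<notin> DX Y" unfolding DX_def by auto
    thus ?thesis by blast
  qed
qed

context setting
begin

definition Rg :: "real set set set" where "Rg = range (\<lambda>u. tfam \<tau>2 Ib {Ch u})"

lemma Rg_le: "u \<le> v \<Longrightarrow> tfam \<tau>2 Ib {Ch v} \<subseteq> tfam \<tau>2 Ib {Ch u}"
proof -
  assume h: "u \<le> v"
  show ?thesis by (rule tfam_anti) (use Ch_mono[OF h] in simp)
qed

lemma Rg_strict: "u < v \<Longrightarrow> \<not> tfam \<tau>2 Ib {Ch u} \<subseteq> tfam \<tau>2 Ib {Ch v}"
proof -
  assume h: "u < v"
  show ?thesis
  proof (rule not_sub[of _ "Ch u" "Ch v"])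
    show "\<forall>A\<in>{Ch u}. finite (A - Ch u)" by simp
    show "Ch v \<in> {Ch v}" by simp
    show "infinite (Ch v - Ch u)" by (rule Ch_inf[OF h])
  qed
qed

lemma Rg_inj: "inj (\<lambda>u. tfam \<tau>2 Ib {Ch u})"
proof (rule injI)
  fix u v assume eq: "tfam \<tau>2 Ib {Ch u} = tfam \<tau>2 Ib {Ch v}"
  show "u = v"
  proof (rule ccontr)
    assume "u \<noteq> v"
    hence "u < v \<or> v < u" by arith
    thus False
    proof
      assume "u < v" from Rg_strict[OF this] eq show False by simp
    next
      assume "v < u" from Rg_strict[OF this] eq show False by simp
    qed
  qed
qed

lemma Rg_props: "Rg \<subseteq> L0" "topchain Rg" "Rg \<approx> (UNIV :: real set)"
  "\<forall>\<sigma>\<in>Rg. \<tau>1 \<subseteq> \<sigma> \<and> \<sigma> \<subseteq> \<tau>2" "\<tau>2 \<in> L0star \<Longrightarrow> Rg \<subseteq> L0star"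
proof -
  show "Rg \<subseteq> L0" unfolding Rg_def using tf_L0(1) by auto
  show "topchain Rg" unfolding topchain_def Rg_def
  proof (intro ballI)
    fix a b assume "a \<in> range (\<lambda>u. tfam \<tau>2 Ib {Ch u})" "b \<in> range (\<lambda>u. tfam \<tau>2 Ib {Ch u})"
    then obtain u v where ab: "a = tfam \<tau>2 Ib {Ch u}" "b = tfam \<tau>2 Ib {Ch v}" by blast
    show "a \<subseteq> b \<or> b \<subseteq> a"
    proof (cases "u \<le> v")
      case True thus ?thesis unfolding ab using Rg_le[of u v] by simp
    next
      case False thus ?thesis unfolding ab using Rg_le[of v u] by simp
    qed
  qed
  show "Rg \<approx> (UNIV :: real set)" unfolding Rg_def by (rule range_eqpoll[OF Rg_inj])
  show "\<forall>\<sigma>\<in>Rg. \<tau>1 \<subseteq> \<sigma> \<and> \<sigma> \<subseteq> \<tau>2" unfolding Rg_def using tf_L0(2,3) by auto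
  show "\<tau>2 \<in> L0star \<Longrightarrow> Rg \<subseteq> L0star" unfolding Rg_def using tf_L0star by auto
qed

definition Sg :: "real set set set" where "Sg = range (\<lambda>u. tfam \<tau>2 Ib {Br (ebr u)})"

lemma Sg_inc: "u \<noteq> v \<Longrightarrow> \<not> tfam \<tau>2 Ib {Br (ebr u)} \<subseteq> tfam \<tau>2 Ib {Br (ebr v)}"
proof -
  assume "u \<noteq> v"
  hence ne: "ebr u \<noteq> ebr v" using ebr_inj by (simp add: inj_eq)
  show ?thesis
  proof (rule not_sub[of _ "- Br (ebr v)" "Br (ebr v)"])
    have "Br (ebr u) - (- Br (ebr v)) = Br (ebr u) \<inter> Br (ebr v)" by blast
    thus "\<forall>A\<in>{Br (ebr u)}. finite (A - - Br (ebr v))" using Br_ad[OF ne] by simp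
    show "Br (ebr v) \<in> {Br (ebr v)}" by simp
    have "Br (ebr v) - - Br (ebr v) = Br (ebr v)" by blast
    thus "infinite (Br (ebr v) - - Br (ebr v))" using Br_inf by simp
  qed
qed

lemma Sg_props: "Sg \<subseteq> L0" "pairwise_incomparable Sg" "Sg \<approx> (UNIV :: real set)"
  "\<forall>\<sigma>\<in>Sg. \<tau>1 \<subseteq> \<sigma> \<and> \<sigma> \<subseteq> \<tau>2" "\<tau>2 \<in> L0star \<Longrightarrow> Sg \<subseteq> L0star"
proof -
  show "Sg \<subseteq> L0" unfolding Sg_def using tf_L0(1) by auto
  show "pairwise_incomparable Sg" unfolding pairwise_incomparable_def Sg_def
  proof (intro ballI impI)
    fix a b assume "a \<in> range (\<lambda>u. tfam \<tau>2 Ib {Br (ebr u)})" "b \<in> range (\<lambda>u. tfam \<tau>2 Ib {Br (ebr u)})"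
      and ab: "a \<noteq> b"
    then obtain u v where rs: "a = tfam \<tau>2 Ib {Br (ebr u)}" "b = tfam \<tau>2 Ib {Br (ebr v)}" by blast
    hence uv: "u \<noteq> v" using ab by blast
    show "\<not> a \<subseteq> b \<and> \<not> b \<subseteq> a" unfolding rs using Sg_inc[OF uv] Sg_inc[OF uv[symmetric]] by simp
  qed
  have "inj (\<lambda>u. tfam \<tau>2 Ib {Br (ebr u)})"
  proof (rule injI)
    fix u v assume eq: "tfam \<tau>2 Ib {Br (ebr u)} = tfam \<tau>2 Ib {Br (ebr v)}"
    show "u = v"
    proof (rule ccontr)
      assume "u \<noteq> v"
      from Sg_inc[OF this] eq show False by simp
    qed
  qed
  thus "Sg \<approx> (UNIV :: real set)" unfolding Sg_def by (rule range_eqpoll)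
  show "\<forall>\<sigma>\<in>Sg. \<tau>1 \<subseteq> \<sigma> \<and> \<sigma> \<subseteq> \<tau>2" unfolding Sg_def using tf_L0(2,3) by auto
  show "\<tau>2 \<in> L0star \<Longrightarrow> Sg \<subseteq> L0star" unfolding Sg_def using tf_L0star by auto
qed

definition Tg :: "real set set set" where "Tg = range (\<lambda>X. tfam \<tau>2 Ib (AX X))"

lemma Tg_inc: "X \<noteq> Y \<Longrightarrow> \<not> tfam \<tau>2 Ib (AX Y) \<subseteq> tfam \<tau>2 Ib (AX X)"
proof -
  assume "X \<noteq> Y"
  then obtain p where p: "p \<in> DX X" "p \<notin> DX Y" using DX_diff by blast
  show ?thesis
  proof (rule not_sub[of _ "- Br (e2 p)" "Br (e2 p)"])
    show "\<forall>A\<in>AX Y. finite (A - - Br (e2 p))"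
    proof
      fix A assume "A \<in> AX Y"
      hence "(\<exists>j. A = Col j) \<or> (\<exists>p'. p' \<in> DX Y \<and> A = Br (e2 p'))" unfolding AX_def by blast
      moreover have "A - - Br (e2 p) = A \<inter> Br (e2 p)" by blast
      moreover
      { fix p' assume "p' \<in> DX Y"
        hence "e2 p' \<noteq> e2 p" using p(2) e2_inj by (auto simp: inj_eq)
        hence "finite (Br (e2 p') \<inter> Br (e2 p))" by (rule Br_ad) }
      ultimately show "finite (A - - Br (e2 p))" using Col_Br by auto
    qed
    show "Br (e2 p) \<in> AX X" unfolding AX_def using p(1) by blast
    have "Br (e2 p) - - Br (e2 p) = Br (e2 p)" by blast
    thus "infinite (Br (e2 p) - - Br (e2 p))" using Br_inf by simp
  qed
qed

lemma Tg_notstar: "tfam \<tau>2 Ib (AX X) \<notin> L0star"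
proof
  let ?v = "tfam \<tau>2 Ib (AX X)"
  assume st: "?v \<in> L0star"
  obtain Ob :: "nat \<Rightarrow> real set" where Ob: "\<And>n. Ob n \<in> ?v" "\<And>n. 0 \<in> Ob n"
    and Obb: "\<And>V. V \<in> nbhds ?v 0 \<Longrightarrow> \<exists>m. \<forall>n\<ge>m. Ob n \<subseteq> V"
    using L0star_base[OF st] by blast
  have "\<forall>k. \<exists>n. n \<in> Col k \<and> Ib n \<subseteq> Ob k"
  proof
    fix k
    have "Col k \<in> AX X" unfolding AX_def by blast
    then obtain i0 where i0: "\<forall>n\<in>Col k. i0 \<le> n \<longrightarrow> Ib n \<subseteq> Ob k"
      using Ob[of k] unfolding tfam_def by blast
    obtain n where "n \<ge> i0" "n \<in> Col k" using Col_inf[of k] unfolding infinite_nat_iff_unbounded_le by blast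
    thus "\<exists>n. n \<in> Col k \<and> Ib n \<subseteq> Ob k" using i0 by blast
  qed
  then obtain mm where mm: "\<And>k. mm k \<in> Col k" "\<And>k. Ib (mm k) \<subseteq> Ob k" by metis
  let ?S = "- range mm"
  have "\<forall>A\<in>AX X. finite (A - ?S)"
  proof
    fix A assume "A \<in> AX X"
    hence "(\<exists>j. A = Col j) \<or> (\<exists>p. A = Br (e2 p))" unfolding AX_def by blast
    moreover have "A - ?S = A \<inter> range mm" by blast
    moreover have "Col j \<inter> range mm \<subseteq> {mm j}" for j
    proof
      fix n assume "n \<in> Col j \<inter> range mm"
      then obtain k where k: "n = mm k" "n \<in> Col j" by blast
      have "k = j"
      proof (rule ccontr)
        assume "k \<noteq> j"
        thus False using Col_disj[of k j] mm(1)[of k] k by blast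
      qed
      thus "n \<in> {mm j}" using k by simp
    qed
    hence "finite (Col j \<inter> range mm)" for j using finite_subset by blast
    moreover have "Br d \<inter> range mm = {}" for d using Col_Br mm(1) by blast
    ultimately show "finite (A - ?S)" by auto
  qed
  hence "VS ?S \<in> ?v" using VS_mem by blast
  hence "VS ?S \<in> nbhds ?v 0" using W(2) unfolding VS_def by (intro nbhds_mem) auto
  then obtain m where "\<forall>n\<ge>m. Ob n \<subseteq> VS ?S" using Obb by blast
  hence "Ib (mm m) \<subseteq> VS ?S" using mm(2)[of m] by blast
  hence "mm m \<in> ?S" by (rule VS_I)
  thus False by blast
qed

lemma Tg_props: "Tg \<subseteq> L0 - L0star" "pairwise_incomparable Tg" "Tg \<approx> (UNIV :: real set set)"
  "\<forall>\<sigma>\<in>Tg. \<tau>1 \<subseteq> \<sigma> \<and> \<sigma> \<subseteq> \<tau>2"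
proof -
  show "Tg \<subseteq> L0 - L0star"
  proof
    fix \<sigma> assume "\<sigma> \<in> Tg"
    then obtain X where X: "\<sigma> = tfam \<tau>2 Ib (AX X)" unfolding Tg_def by blast
    show "\<sigma> \<in> L0 - L0star" unfolding X using tf_L0(1) Tg_notstar by simp
  qed
  show "pairwise_incomparable Tg" unfolding pairwise_incomparable_def Tg_def
  proof (intro ballI impI)
    fix a b assume "a \<in> range (\<lambda>X. tfam \<tau>2 Ib (AX X))" "b \<in> range (\<lambda>X. tfam \<tau>2 Ib (AX X))"
      and ab: "a \<noteq> b"
    then obtain X Y where XY: "a = tfam \<tau>2 Ib (AX X)" "b = tfam \<tau>2 Ib (AX Y)" by blast
    hence uv: "X \<noteq> Y" using ab by blast
    show "\<not> a \<subseteq> b \<and> \<not> b \<subseteq> a" unfolding XY using Tg_inc[OF uv] Tg_inc[OF uv[symmetric]] by simp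
  qed
  have "inj (\<lambda>X. tfam \<tau>2 Ib (AX X))"
  proof (rule injI)
    fix X Y assume eq: "tfam \<tau>2 Ib (AX X) = tfam \<tau>2 Ib (AX Y)"
    show "X = Y"
    proof (rule ccontr)
      assume "X \<noteq> Y"
      from Tg_inc[OF this] eq show False by simp
    qed
  qed
  thus "Tg \<approx> (UNIV :: real set set)" unfolding Tg_def by (rule range_eqpoll)
  show "\<forall>\<sigma>\<in>Tg. \<tau>1 \<subseteq> \<sigma> \<and> \<sigma> \<subseteq> \<tau>2" unfolding Tg_def using tf_L0(2,3) by auto
qed

end


definition fpl :: "real \<Rightarrow> real \<Rightarrow> real \<Rightarrow> real" where
  "fpl a b t = (b/a) * t + ((1-b)/(1-a) - b/a) * (max 0 (t - a) - max 0 (-t - a))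
      + (1 - (1-b)/(1-a)) * (max 0 (t - 1) - max 0 (-t - 1))"

lemma fpl_cont: "continuous_on UNIV (fpl a b)"
  unfolding fpl_def by (intro continuous_intros)

lemma fpl_odd: "fpl a b (-t) = - fpl a b t"
  unfolding fpl_def by (simp add: algebra_simps)

lemma lin_id: "(p::real) * t + (c - p) * (t - a) + (1 - c) * (t - 1) = t + p * a - c * a + c - 1"
  by (simp add: algebra_simps)

lemma lin_id2: "(t::real) + b - c * a + c - 1 = t + b + c * (1 - a) - 1"
  by (simp add: algebra_simps)

lemma fpl_pos:
  assumes ab: "0 < a" "a < 1" "0 < b" "b < 1" and t: "0 \<le> t"
  shows "fpl a b t = (if t \<le> a then (b/a) * t else if t \<le> 1 then b + (1-b)/(1-a) * (t - a) else t)"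
proof -
  have z: "max 0 (-t - a) = 0" "max 0 (-t - 1) = 0" using t ab by auto
  have e: "fpl a b t = (b/a) * t + ((1-b)/(1-a) - b/a) * max 0 (t - a) + (1 - (1-b)/(1-a)) * max 0 (t - 1)"
    unfolding fpl_def z by simp
  have a1: "1 - a \<noteq> 0" "a \<noteq> 0" using ab by auto
  show ?thesis
  proof (cases "t \<le> a")
    case True
    hence "max 0 (t - a) = 0" "max 0 (t - 1) = 0" using ab by auto
    thus ?thesis using True e by simp
  next
    case False
    note F = False
    show ?thesis
    proof (cases "t \<le> 1")
      case True
      hence "max 0 (t - a) = t - a" "max 0 (t - 1) = 0" using F by auto
      hence "fpl a b t = (b/a) * t + ((1-b)/(1-a) - b/a) * (t - a)" using e by simp
      also have "\<dots> = b + (1-b)/(1-a) * (t - a)" using a1 by (simp add: field_simps)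
      finally show ?thesis using F True by simp
    next
      case False
      hence "max 0 (t - a) = t - a" "max 0 (t - 1) = t - 1" using F by auto
      hence "fpl a b t = (b/a) * t + ((1-b)/(1-a) - b/a) * (t - a) + (1 - (1-b)/(1-a)) * (t - 1)" using e by simp
      also have "\<dots> = t + (b/a) * a - (1-b)/(1-a) * a + (1-b)/(1-a) - 1"
        using lin_id[of "b/a" t "(1-b)/(1-a)" a] .
      also have "(b/a) * a = b" using a1 by simp
      also have "t + b - (1-b)/(1-a) * a + (1-b)/(1-a) - 1 = t + b + (1-b)/(1-a) * (1 - a) - 1"
        using lin_id2[of t b "(1-b)/(1-a)" a] .
      also have "(1-b)/(1-a) * (1 - a) = 1 - b" using a1 by simp
      also have "t + b + (1 - b) - 1 = t" by simp
      finally show ?thesis using F False by simp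
    qed
  qed
qed

lemma fpl_pos_props:
  assumes ab: "0 < a" "a < 1" "0 < b" "b < 1" and t: "0 \<le> t"
  shows "0 \<le> fpl a b t" "t < a \<Longrightarrow> fpl a b t < b" "t < 1 \<Longrightarrow> fpl a b t < 1"
    "1 \<le> t \<Longrightarrow> fpl a b t = t" "fpl b a (fpl a b t) = t"
proof -
  have a1: "1 - a > 0" "1 - b > 0" using ab by auto
  note P = fpl_pos[OF ab t]
  show "0 \<le> fpl a b t"
  proof -
    have "0 \<le> (1-b)/(1-a) * (t - a)" if "a \<le> t" using a1 that by simp
    thus ?thesis unfolding P using ab t by simp
  qed
  show "t < a \<Longrightarrow> fpl a b t < b"
  proof -
    assume ta: "t < a"
    have "(b/a) * t < (b/a) * a" using ta ab by (intro mult_strict_left_mono) auto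
    thus ?thesis unfolding P using ta ab by simp
  qed
  show "t < 1 \<Longrightarrow> fpl a b t < 1"
  proof -
    assume t1: "t < 1"
    show ?thesis
    proof (cases "t \<le> a")
      case True
      have "(b/a) * t \<le> (b/a) * a" using True ab by (intro mult_left_mono) auto
      also have "\<dots> = b" using ab by simp
      finally have "(b/a) * t \<le> b" .
      hence "(b/a) * t < 1" using ab by linarith
      thus ?thesis unfolding P using True by simp
    next
      case False
      have "(1-b)/(1-a) * (t - a) < (1-b)/(1-a) * (1 - a)" using a1 t1 by (intro mult_strict_left_mono) auto
      also have "\<dots> = 1 - b" using a1 by simp
      finally show ?thesis unfolding P using False t1 by simp
    qed
  qed
  show "1 \<le> t \<Longrightarrow> fpl a b t = t" unfolding P using ab by auto
  show "fpl b a (fpl a b t) = t"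
  proof (cases "t \<le> a")
    case True
    have s: "fpl a b t = (b/a) * t" unfolding P using True by simp
    have "0 \<le> (b/a) * t" using ab t by simp
    moreover have "(b/a) * t \<le> b"
    proof -
      have "(b/a) * t \<le> (b/a) * a" using True ab by (intro mult_left_mono) auto
      thus ?thesis using ab by simp
    qed
    ultimately have "fpl b a ((b/a) * t) = (a/b) * ((b/a) * t)"
      using fpl_pos[of b a "(b/a) * t"] ab by simp
    also have "\<dots> = t" using ab by simp
    finally show ?thesis using s by simp
  next
    case False
    note F = False
    show ?thesis
    proof (cases "t \<le> 1")
      case True
      define s where "s = b + (1-b)/(1-a) * (t - a)"
      have fs: "fpl a b t = s" unfolding P s_def using F True by simp
      have s0: "0 \<le> s" "b \<le> s" using F a1 ab unfolding s_def by simp_all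
      have s1: "s \<le> 1"
      proof -
        have "(1-b)/(1-a) * (t - a) \<le> (1-b)/(1-a) * (1 - a)" using a1 True by (intro mult_left_mono) auto
        also have "\<dots> = 1 - b" using a1 by simp
        finally show ?thesis unfolding s_def by simp
      qed
      have "fpl b a s = (if s \<le> b then (a/b) * s else a + (1-a)/(1-b) * (s - b))"
        using fpl_pos[of b a s] ab s0 s1 by simp
      also have "\<dots> = t"
      proof (cases "s \<le> b")
        case True
        hence "s = b" using s0 by simp
        hence "(1-b)/(1-a) * (t - a) = 0" unfolding s_def by simp
        hence "t = a" using a1 by simp
        thus ?thesis using \<open>s = b\<close> ab by simp
      next
        case False
        have "a + (1-a)/(1-b) * (s - b) = a + (1-a)/(1-b) * ((1-b)/(1-a) * (t - a))" unfolding s_def by simp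
        also have "\<dots> = t" using a1 by simp
        finally show ?thesis using False by simp
      qed
      finally show ?thesis using fs by simp
    next
      case False
      have "fpl a b t = t" unfolding P using F False by simp
      moreover have "fpl b a t = t" using fpl_pos[of b a t] ab False by simp
      ultimately show ?thesis by simp
    qed
  qed
qed

lemma fpl_props:
  assumes ab: "0 < a" "a < 1" "0 < b" "b < 1"
  shows "\<bar>t\<bar> < a \<Longrightarrow> \<bar>fpl a b t\<bar> < b" "\<bar>t\<bar> < 1 \<Longrightarrow> \<bar>fpl a b t\<bar> < 1"
    "1 \<le> \<bar>t\<bar> \<Longrightarrow> fpl a b t = t" "fpl b a (fpl a b t) = t"
proof -
  have cases: "P t" if "\<And>t. 0 \<le> t \<Longrightarrow> P t" "\<And>t. 0 \<le> t \<Longrightarrow> P (-t)" for P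
    using that[of t] that[of "-t"] by (cases "0 \<le> t") auto
  note Q = fpl_pos_props[OF ab]
  show "\<bar>t\<bar> < a \<Longrightarrow> \<bar>fpl a b t\<bar> < b"
    by (rule cases[of "\<lambda>t. \<bar>t\<bar> < a \<longrightarrow> \<bar>fpl a b t\<bar> < b", rule_format])
       (use Q fpl_odd in auto)
  show "\<bar>t\<bar> < 1 \<Longrightarrow> \<bar>fpl a b t\<bar> < 1"
    by (rule cases[of "\<lambda>t. \<bar>t\<bar> < 1 \<longrightarrow> \<bar>fpl a b t\<bar> < 1", rule_format])
       (use Q fpl_odd in auto)
  show "1 \<le> \<bar>t\<bar> \<Longrightarrow> fpl a b t = t"
    by (rule cases[of "\<lambda>t. 1 \<le> \<bar>t\<bar> \<longrightarrow> fpl a b t = t", rule_format])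
       (use Q fpl_odd in auto)
  show "fpl b a (fpl a b t) = t"
    by (rule cases[of "\<lambda>t. fpl b a (fpl a b t) = t"]) (use Q fpl_odd in auto)
qed


lemma eta_L0star: "eta \<in> L0 \<Longrightarrow> eta \<in> L0star"
proof -
  assume eL: "eta \<in> L0"
  show ?thesis
  proof (rule L0starI[OF eL, of "range (\<lambda>k::nat. ball 0 (1 / (real k + 1)))"])
    show "countable (range (\<lambda>k::nat. ball (0::real) (1 / (real k + 1))))" by simp
    show "range (\<lambda>k::nat. ball 0 (1 / (real k + 1))) \<subseteq> nbhds eta 0"
    proof
      fix c assume "c \<in> range (\<lambda>k::nat. ball (0::real) (1 / (real k + 1)))"
      then obtain k :: nat where "c = ball 0 (1 / (real k + 1))" by blast
      moreover have "(0::real) < 1 / (real k + 1)" by simp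
      ultimately show "c \<in> nbhds eta 0" using nbhds_eta_ball by simp
    qed
    fix V assume "V \<in> nbhds eta 0"
    then obtain e where e: "e > 0" "ball 0 e \<subseteq> V" using nbhds_etaD by blast
    obtain k :: nat where k: "1 / e < real k" using reals_Archimedean2 by blast
    have "1 / (real k + 1) \<le> e"
    proof -
      have "1 / e < real k + 1" using k by simp
      thus ?thesis using e(1) by (smt (verit, ccfv_SIG) divide_less_eq mult.commute mult_imp_div_pos_le of_nat_0_le_iff)
    qed
    hence "ball 0 (1 / (real k + 1)) \<subseteq> ball (0::real) e" by (rule subset_ball)
    hence "ball 0 (1 / (real k + 1)) \<subseteq> V" using e(2) by (rule order_trans)
    thus "\<exists>c\<in>range (\<lambda>k::nat. ball 0 (1 / (real k + 1))). c \<subseteq> V" by blast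
  qed
qed

lemma tfam_monoJ:
  assumes JJ: "\<And>n. J' n \<subseteq> J n"
  shows "tfam \<tau> J \<A> \<subseteq> tfam \<tau> J' \<A>"
proof
  fix U assume U: "U \<in> tfam \<tau> J \<A>"
  have "\<exists>k. \<forall>n\<in>A. k \<le> n \<longrightarrow> J' n \<subseteq> U" if h: "0 \<in> U" "A \<in> \<A>" for A
  proof -
    obtain k where k: "\<forall>n\<in>A. k \<le> n \<longrightarrow> J n \<subseteq> U" using U h unfolding tfam_def by blast
    have "\<forall>n\<in>A. k \<le> n \<longrightarrow> J' n \<subseteq> U"
    proof (intro ballI impI)
      fix n assume "n \<in> A" "k \<le> n"
      hence "J n \<subseteq> U" using k by blast
      with JJ[of n] show "J' n \<subseteq> U" by (rule order_trans)
    qed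
    thus ?thesis by blast
  qed
  thus "U \<in> tfam \<tau> J' \<A>" using U unfolding tfam_def by blast
qed

lemma fpl_isCont: "isCont (fpl a b) t"
proof -
  have "continuous_on UNIV (fpl a b)" by (rule fpl_cont)
  hence "\<forall>t\<in>UNIV. isCont (fpl a b) t" using continuous_on_eq_continuous_at[OF open_UNIV] by blast
  thus ?thesis by blast
qed

locale eta_setting = setting +
  assumes e: "\<tau>2 = eta"
begin

definition good :: "(nat \<Rightarrow> real) \<Rightarrow> bool" where "good g \<longleftrightarrow> (\<forall>n. 0 < g n \<and> g n < 1)"

definition Jg :: "(nat \<Rightarrow> real) \<Rightarrow> nat \<Rightarrow> real set" where "Jg g n = ball (x n) (g n * r n)"

definition sg :: "(nat \<Rightarrow> real) \<Rightarrow> real set set" where "sg g = tfam eta (Jg g) {UNIV}"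

lemma Jg_sub: "good g \<Longrightarrow> Jg g n \<subseteq> Ib n"
proof -
  assume "good g"
  hence "g n < 1" unfolding good_def by blast
  hence "g n * r n \<le> r n" using r(1)[of n] by simp
  thus ?thesis unfolding Jg_def Ib_def by (rule subset_ball)
qed

lemma bbJ: "good g \<Longrightarrow> V \<in> nbhds \<tau>1 0 \<Longrightarrow> \<exists>m. \<forall>n\<ge>m. Jg g n \<subseteq> V"
proof -
  assume g: "good g" and V: "V \<in> nbhds \<tau>1 0"
  obtain m where m: "\<forall>n\<ge>m. Ib n \<subseteq> V" using bbI[OF V] by blast
  have "\<forall>n\<ge>m. Jg g n \<subseteq> V"
  proof (intro allI impI)
    fix n assume "m \<le> n"
    hence "Ib n \<subseteq> V" using m by blast
    with Jg_sub[OF g, of n] show "Jg g n \<subseteq> V" by (rule order_trans)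
  qed
  thus ?thesis by blast
qed

lemma eL: "eta \<in> L0" using t2 e by simp
lemma t1e: "\<tau>1 \<subseteq> eta" using t12 e by simp

lemma sg_L0: "good g \<Longrightarrow> sg g \<in> L0 \<and> \<tau>1 \<subseteq> sg g \<and> sg g \<subseteq> \<tau>2"
proof -
  assume g: "good g"
  note T = tfam_L0[OF t1L eL t1e bbJ[OF g], of "{UNIV}"]
  show ?thesis unfolding sg_def using T e by simp
qed

lemma sg_star: "good g \<Longrightarrow> sg g \<in> L0star"
  unfolding sg_def
proof (rule tfam_L0star[OF t1L eta_L0star[OF eL] t1e])
  assume g: "good g"
  show "\<And>V. V \<in> nbhds \<tau>1 0 \<Longrightarrow> \<exists>m. \<forall>n\<ge>m. Jg g n \<subseteq> V" using bbJ[OF g] by blast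
  show "\<And>n. open (Jg g n)" by (simp add: Jg_def)
  show "\<And>n. 0 \<notin> Jg g n" using Jg_sub[OF g] Ib_0 by blast
qed

lemma sg_mono:
  assumes hg: "\<And>n. h n \<le> g n"
  shows "sg g \<subseteq> sg h"
  unfolding sg_def
proof (rule tfam_monoJ)
  fix n
  have "h n * r n \<le> g n * r n" using hg[of n] r(1)[of n] by (simp add: mult_right_mono)
  thus "Jg h n \<subseteq> Jg g n" unfolding Jg_def by (rule subset_ball)
qed

lemma sg_notsub:
  assumes g: "good g" and h: "good h" and inf: "\<forall>k. \<exists>n\<ge>k. g n < h n"
  shows "\<not> sg g \<subseteq> sg h"
proof
  assume sub: "sg g \<subseteq> sg h"
  define V where "V = ball 0 (\<delta>/2) \<union> \<Union>(range (Jg g))"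
  have "open V" unfolding V_def Jg_def by (intro open_Un open_Union) auto
  hence "V \<in> eta" unfolding eta_def by simp
  moreover have "\<forall>n\<in>UNIV. 0 \<le> n \<longrightarrow> Jg g n \<subseteq> V" unfolding V_def by blast
  ultimately have "V \<in> sg g" unfolding sg_def tfam_def by blast
  hence "V \<in> sg h" using sub by blast
  moreover have "0 \<in> V" unfolding V_def using d(1) by simp
  ultimately obtain k where k: "\<forall>n\<in>UNIV. k \<le> n \<longrightarrow> Jg h n \<subseteq> V" unfolding sg_def tfam_def by blast
  obtain n where n: "n \<ge> k" "g n < h n" using inf by blast
  define y where "y = x n + g n * r n"
  have gn: "0 < g n" "g n < 1" using g unfolding good_def by auto
  have rn: "0 < r n" "r n \<le> 1/4" "r n \<le> \<delta>/4" using r by auto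
  have "y \<in> Jg h n" unfolding y_def Jg_def using n(2) rn(1) gn by (simp add: dist_real_def)
  hence yV: "y \<in> V" using k n(1) by blast
  have "g n * r n \<le> r n" using gn rn by simp
  have "\<bar>x n\<bar> \<le> \<bar>x n + g n * r n\<bar> + \<bar>g n * r n\<bar>"
    using abs_triangle_ineq4[of "x n + g n * r n" "g n * r n"] by simp
  moreover have "\<bar>g n * r n\<bar> = g n * r n" using gn rn by simp
  ultimately have "\<bar>y\<bar> \<ge> \<delta> - r n" unfolding y_def using x_big[of n] \<open>g n * r n \<le> r n\<close> by linarith
  hence "y \<notin> ball 0 (\<delta>/2)" using rn d(1) by (simp add: dist_real_def)
  moreover have "y \<notin> Jg g n" unfolding y_def Jg_def using gn rn by (simp add: dist_real_def)
  moreover have "y \<notin> Jg g m" if "m \<noteq> n" for m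
  proof -
    have "1 < \<bar>x n - x m\<bar>" using sp[OF that[symmetric]] .
    moreover have "g m * r m \<le> r m" using g r(1)[of m] unfolding good_def by (simp add: less_imp_le)
    moreover have "r m \<le> 1/4" using r(2) .
    moreover have "\<bar>x n - x m\<bar> \<le> \<bar>y - x m\<bar> + \<bar>g n * r n\<bar>"
      using abs_triangle_ineq4[of "y - x m" "g n * r n"] unfolding y_def by simp
    moreover have "\<bar>g n * r n\<bar> = g n * r n" using gn rn by simp
    ultimately have "\<bar>y - x m\<bar> \<ge> g m * r m" using \<open>g n * r n \<le> r n\<close> rn by linarith
    thus ?thesis unfolding Jg_def by (simp add: dist_real_def)
  qed
  ultimately have nn: "\<And>m. y \<notin> Jg g m" by metis
  show False using yV nn \<open>y \<notin> ball 0 (\<delta>/2)\<close> unfolding V_def by blast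
qed

end


context eta_setting
begin

definition Psi :: "(nat \<Rightarrow> real) \<Rightarrow> (nat \<Rightarrow> real) \<Rightarrow> nat \<Rightarrow> real \<Rightarrow> real" where
  "Psi g h n y = x n + r n * fpl (g n) (h n) ((y - x n) / r n)"

definition Phi :: "(nat \<Rightarrow> real) \<Rightarrow> (nat \<Rightarrow> real) \<Rightarrow> real \<Rightarrow> real" where
  "Phi g h y = (if \<exists>n. y \<in> Ib n then Psi g h (SOME n. y \<in> Ib n) y else y)"

lemma Ib_unique: "y \<in> Ib n \<Longrightarrow> y \<in> Ib m \<Longrightarrow> m = n"
proof (rule ccontr)
  assume a: "y \<in> Ib n" "y \<in> Ib m" "m \<noteq> n"
  have "\<bar>y - x n\<bar> < 1/4" "\<bar>y - x m\<bar> < 1/4"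
    using a(1,2) r(2)[of n] r(2)[of m] unfolding Ib_def by (auto simp: dist_real_def abs_minus_commute)
  hence "\<bar>x m - x n\<bar> < 1" by linarith
  thus False using sp[OF a(3)] by simp
qed

lemma good_D: "good g \<Longrightarrow> 0 < g n \<and> g n < 1" unfolding good_def by blast

lemma fpl_gh:
  assumes g: "good g" and h: "good h"
  shows "\<bar>t\<bar> < g n \<Longrightarrow> \<bar>fpl (g n) (h n) t\<bar> < h n" "\<bar>t\<bar> < 1 \<Longrightarrow> \<bar>fpl (g n) (h n) t\<bar> < 1"
    "1 \<le> \<bar>t\<bar> \<Longrightarrow> fpl (g n) (h n) t = t" "fpl (h n) (g n) (fpl (g n) (h n) t) = t"
proof -
  have ab: "0 < g n" "g n < 1" "0 < h n" "h n < 1" using good_D[OF g, of n] good_D[OF h, of n] by auto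
  note F = fpl_props[OF ab, of t]
  show "\<bar>t\<bar> < g n \<Longrightarrow> \<bar>fpl (g n) (h n) t\<bar> < h n" by (rule F(1))
  show "\<bar>t\<bar> < 1 \<Longrightarrow> \<bar>fpl (g n) (h n) t\<bar> < 1" by (rule F(2))
  show "1 \<le> \<bar>t\<bar> \<Longrightarrow> fpl (g n) (h n) t = t" by (rule F(3))
  show "fpl (h n) (g n) (fpl (g n) (h n) t) = t" by (rule F(4))
qed

lemma Psi_out:
  assumes g: "good g" and h: "good h" and y: "y \<notin> Ib n"
  shows "Psi g h n y = y"
proof -
  have rn: "r n > 0" using r(1) .
  have "\<bar>y - x n\<bar> \<ge> r n" using y unfolding Ib_def by (simp add: dist_real_def abs_minus_commute)
  hence "1 \<le> \<bar>(y - x n) / r n\<bar>" using rn by simp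
  hence "fpl (g n) (h n) ((y - x n) / r n) = (y - x n) / r n"
    by (rule fpl_gh(3)[OF g h])
  moreover have "r n \<noteq> 0" using rn by simp
  ultimately show ?thesis unfolding Psi_def by simp
qed

lemma Phi_eq:
  assumes g: "good g" and h: "good h" and nm: "\<And>m. m \<noteq> n \<Longrightarrow> y \<notin> Ib m"
  shows "Phi g h y = Psi g h n y"
proof (cases "y \<in> Ib n")
  case True
  hence ex: "\<exists>n. y \<in> Ib n" by blast
  have "y \<in> Ib (SOME n. y \<in> Ib n)" using someI_ex[OF ex] .
  hence "(SOME n. y \<in> Ib n) = n" using Ib_unique True by blast
  thus ?thesis unfolding Phi_def using ex by simp
next
  case False
  have "\<not> (\<exists>n. y \<in> Ib n)"
  proof
    assume "\<exists>n. y \<in> Ib n"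
    then obtain n' where n': "y \<in> Ib n'" by blast
    show False
    proof (cases "n' = n")
      case True thus False using n' False by simp
    next
      case False thus False using n' nm[OF False] by simp
    qed
  qed
  hence "Phi g h y = y" unfolding Phi_def by simp
  thus ?thesis using Psi_out[OF g h False] by simp
qed

lemma Psi_cont: "isCont (Psi g h n) p"
proof -
  have "r n \<noteq> 0" using r(1)[of n] by simp
  hence "isCont (\<lambda>y. (y - x n) / r n) p" by (intro continuous_intros)
  hence "isCont (\<lambda>y. fpl (g n) (h n) ((y - x n) / r n)) p" by (rule isCont_o2[OF _ fpl_isCont])
  hence "isCont (\<lambda>y. x n + r n * fpl (g n) (h n) ((y - x n) / r n)) p" by (intro continuous_intros)
  thus ?thesis unfolding Psi_def[abs_def] by simp
qed

lemma Phi_cont: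
  assumes g: "good g" and h: "good h"
  shows "isCont (Phi g h) p"
proof -
  define n0 where "n0 = (if \<exists>n. \<bar>p - x n\<bar> < 1/2 then SOME n. \<bar>p - x n\<bar> < 1/2 else 0)"
  have claim: "\<And>m. m \<noteq> n0 \<Longrightarrow> y \<notin> Ib m" if y: "dist y p < 1/4" for y
  proof -
    fix m assume mn: "m \<noteq> n0"
    show "y \<notin> Ib m"
    proof
      assume ym: "y \<in> Ib m"
      have yp: "\<bar>y - p\<bar> < 1/4" using y by (simp add: dist_real_def)
      have "\<bar>y - x m\<bar> < 1/4" using ym r(2)[of m] unfolding Ib_def by (auto simp: dist_real_def abs_minus_commute)
      show False
      proof (cases "\<exists>n. \<bar>p - x n\<bar> < 1/2")
        case True
        have "\<bar>p - x n0\<bar> < 1/2" unfolding n0_def using someI_ex[OF True] True by simp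
        hence "\<bar>x m - x n0\<bar> < 1" using yp \<open>\<bar>y - x m\<bar> < 1/4\<close> by linarith
        thus False using sp[OF mn] by simp
      next
        case False
        have "\<bar>p - x m\<bar> < 1/2" using yp \<open>\<bar>y - x m\<bar> < 1/4\<close> by linarith
        thus False using False by blast
      qed
    qed
  qed
  have "eventually (\<lambda>y. Phi g h y = Psi g h n0 y) (nhds p)"
    unfolding eventually_nhds_metric
  proof (intro exI[of _ "1/4"] conjI allI impI)
    fix y :: real assume "dist y p < 1/4"
    hence "\<And>m. m \<noteq> n0 \<Longrightarrow> y \<notin> Ib m" by (rule claim)
    thus "Phi g h y = Psi g h n0 y" by (rule Phi_eq[OF g h])
  qed simp
  hence "isCont (Phi g h) p \<longleftrightarrow> isCont (Psi g h n0) p" by (rule isCont_cong)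
  thus ?thesis using Psi_cont by simp
qed

lemma Phi_cont_on: "good g \<Longrightarrow> good h \<Longrightarrow> continuous_on UNIV (Phi g h)"
  using Phi_cont by (intro continuous_at_imp_continuous_on) blast

lemma Phi_0: "Phi g h 0 = 0"
  unfolding Phi_def using Ib_0 by simp

lemma Phi_in:
  assumes g: "good g" and h: "good h" and y: "y \<in> Ib n"
  shows "Phi g h y = Psi g h n y" "Psi g h n y \<in> Ib n"
proof -
  have "\<And>m. m \<noteq> n \<Longrightarrow> y \<notin> Ib m" using Ib_unique y by blast
  thus "Phi g h y = Psi g h n y" by (rule Phi_eq[OF g h])
  have rn: "r n > 0" using r(1) .
  have "\<bar>y - x n\<bar> < r n" using y unfolding Ib_def by (simp add: dist_real_def abs_minus_commute)
  hence "\<bar>(y - x n) / r n\<bar> < 1" using rn by simp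
  hence "\<bar>fpl (g n) (h n) ((y - x n) / r n)\<bar> < 1"
    by (rule fpl_gh(2)[OF g h])
  hence "\<bar>r n * fpl (g n) (h n) ((y - x n) / r n)\<bar> < r n" using rn by (simp add: abs_mult)
  thus "Psi g h n y \<in> Ib n" unfolding Psi_def Ib_def by (simp add: dist_real_def)
qed

lemma Phi_Jg:
  assumes g: "good g" and h: "good h" and y: "y \<in> Jg g n"
  shows "Phi g h y \<in> Jg h n"
proof -
  have yI: "y \<in> Ib n" using Jg_sub[OF g] y by blast
  have rn: "r n > 0" using r(1) .
  have "\<bar>y - x n\<bar> < g n * r n" using y unfolding Jg_def by (simp add: dist_real_def abs_minus_commute)
  hence "\<bar>(y - x n) / r n\<bar> < g n" using rn by (simp add: divide_less_eq)
  hence "\<bar>fpl (g n) (h n) ((y - x n) / r n)\<bar> < h n"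
    by (rule fpl_gh(1)[OF g h])
  hence "\<bar>r n * fpl (g n) (h n) ((y - x n) / r n)\<bar> < h n * r n" using rn by (simp add: abs_mult)
  hence "Psi g h n y \<in> Jg h n" unfolding Psi_def Jg_def by (simp add: dist_real_def)
  thus ?thesis using Phi_in(1)[OF g h yI] by simp
qed

lemma Phi_inv:
  assumes g: "good g" and h: "good h"
  shows "Phi h g (Phi g h y) = y"
proof (cases "\<exists>n. y \<in> Ib n")
  case True
  then obtain n where yI: "y \<in> Ib n" by blast
  have rn: "r n > 0" using r(1) .
  have z: "Phi g h y = Psi g h n y" "Psi g h n y \<in> Ib n" using Phi_in[OF g h yI] by auto
  have "Phi h g (Psi g h n y) = Psi h g n (Psi g h n y)" using Phi_in(1)[OF h g z(2)] .
  also have "\<dots> = y"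
  proof -
    define t where "t = (y - x n) / r n"
    have "(Psi g h n y - x n) / r n = fpl (g n) (h n) t" unfolding Psi_def t_def using rn by simp
    hence "Psi h g n (Psi g h n y) = x n + r n * fpl (h n) (g n) (fpl (g n) (h n) t)"
      unfolding Psi_def by simp
    also have "fpl (h n) (g n) (fpl (g n) (h n) t) = t"
      by (rule fpl_gh(4)[OF g h])
    finally show ?thesis unfolding t_def using rn by simp
  qed
  finally show ?thesis using z(1) by simp
next
  case False
  hence "Phi g h y = y" "Phi h g y = y" unfolding Phi_def by auto
  thus ?thesis by simp
qed

lemma sg_topo: "good g \<Longrightarrow> istopology (\<lambda>U. U \<in> sg g)"
  using sg_L0 L0_topo by blast

lemma sg_topspace: "good g \<Longrightarrow> topspace (top_of (sg g)) = UNIV"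
proof -
  assume g: "good g"
  have "UNIV \<in> sg g" using sg_L0[OF g] L0_UNIV by blast
  thus ?thesis using openin_subset[of "top_of (sg g)" UNIV] sg_topo[OF g] by auto
qed

lemma Phi_open:
  assumes g: "good g" and h: "good h" and U: "U \<in> sg h"
  shows "Phi g h -` U \<in> sg g"
proof -
  have "U \<in> eta" using U unfolding sg_def tfam_def by blast
  hence oU: "open U" unfolding eta_def by simp
  have "open (Phi g h -` U \<inter> UNIV)"
    using continuous_on_open_vimage[OF open_UNIV] Phi_cont_on[OF g h] oU by blast
  hence "Phi g h -` U \<in> eta" unfolding eta_def by simp
  moreover have "\<exists>k. \<forall>n\<in>A. k \<le> n \<longrightarrow> Jg g n \<subseteq> Phi g h -` U"
    if h0: "0 \<in> Phi g h -` U" "A \<in> {UNIV}" for A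
  proof -
    have "0 \<in> U" using h0(1) Phi_0 by simp
    then obtain k where k: "\<forall>n\<in>UNIV. k \<le> n \<longrightarrow> Jg h n \<subseteq> U" using U unfolding sg_def tfam_def by blast
    have "\<forall>n\<in>A. k \<le> n \<longrightarrow> Jg g n \<subseteq> Phi g h -` U"
    proof (intro ballI impI subsetI)
      fix n y assume "n \<in> A" "k \<le> n" "y \<in> Jg g n"
      hence "Phi g h y \<in> Jg h n" using Phi_Jg[OF g h] by blast
      moreover have "Jg h n \<subseteq> U" using k \<open>k \<le> n\<close> by blast
      ultimately show "y \<in> Phi g h -` U" by blast
    qed
    thus ?thesis by blast
  qed
  ultimately show ?thesis unfolding sg_def tfam_def by blast
qed

lemma sg_homeo:
  assumes g: "good g" and h: "good h"
  shows "top_of (sg g) homeomorphic_space top_of (sg h)"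
proof -
  have cm: "continuous_map (top_of (sg a)) (top_of (sg b)) (Phi a b)" if a: "good a" and b: "good b" for a b
    unfolding continuous_map_def
  proof (intro conjI allI impI)
    show "Phi a b \<in> topspace (top_of (sg a)) \<rightarrow> topspace (top_of (sg b))"
      using sg_topspace[OF b] by simp
    fix U assume "openin (top_of (sg b)) U"
    hence "U \<in> sg b" using sg_topo[OF b] by simp
    hence "Phi a b -` U \<in> sg a" by (rule Phi_open[OF a b])
    moreover have "{y \<in> topspace (top_of (sg a)). Phi a b y \<in> U} = Phi a b -` U"
      using sg_topspace[OF a] by auto
    ultimately show "openin (top_of (sg a)) {y \<in> topspace (top_of (sg a)). Phi a b y \<in> U}"
      using sg_topo[OF a] by simp
  qed
  have "homeomorphic_maps (top_of (sg g)) (top_of (sg h)) (Phi g h) (Phi h g)"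
    unfolding homeomorphic_maps_def
    using cm[OF g h] cm[OF h g] Phi_inv[OF g h] Phi_inv[OF h g] by blast
  thus ?thesis unfolding homeomorphic_space_def by blast
qed

end


definition cs :: "real \<Rightarrow> real" where "cs u = 1 / (2 + exp u)"

lemma cs_pos: "0 < cs u" "cs u < 1"
proof -
  have e: "0 < exp u" by simp
  hence p: "0 < 2 + exp u" by linarith
  thus "0 < cs u" unfolding cs_def by simp
  have "1 < 2 + exp u" using e by linarith
  thus "cs u < 1" unfolding cs_def using p by simp
qed

lemma cs_less: "u < v \<Longrightarrow> cs v < cs u"
proof -
  assume "u < v"
  hence "exp u < exp v" by simp
  moreover have "0 < exp u" by simp
  ultimately have p: "0 < 2 + exp u" and l: "2 + exp u < 2 + exp v" by linarith+
  have "inverse (2 + exp v) < inverse (2 + exp u)" by (rule less_imp_inverse_less[OF l p])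
  thus ?thesis unfolding cs_def by (simp add: inverse_eq_divide)
qed

definition gs :: "real \<Rightarrow> nat \<Rightarrow> real" where
  "gs u n = (if n \<in> Br (ebr u) then 1/2 else 1/4)"

context eta_setting
begin

lemma good_cs: "good (\<lambda>n. cs u)" unfolding good_def using cs_pos by simp
lemma good_gs: "good (gs u)" unfolding good_def gs_def by simp

definition Re :: "real set set set" where "Re = range (\<lambda>u. sg (\<lambda>n. cs u))"
definition Se :: "real set set set" where "Se = range (\<lambda>u. sg (gs u))"

lemma Re_le: "u \<le> v \<Longrightarrow> sg (\<lambda>n. cs u) \<subseteq> sg (\<lambda>n. cs v)"
proof -
  assume "u \<le> v"
  hence "cs v \<le> cs u" using cs_less[of u v] by (cases "u = v") auto
  thus ?thesis by (intro sg_mono)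
qed

lemma Re_strict: "u < v \<Longrightarrow> \<not> sg (\<lambda>n. cs v) \<subseteq> sg (\<lambda>n. cs u)"
proof -
  assume "u < v"
  hence "cs v < cs u" by (rule cs_less)
  hence "\<forall>k::nat. \<exists>n\<ge>k. cs v < cs u" by auto
  thus ?thesis by (rule sg_notsub[OF good_cs good_cs])
qed

lemma Se_inc: "u \<noteq> v \<Longrightarrow> \<not> sg (gs u) \<subseteq> sg (gs v)"
proof -
  assume "u \<noteq> v"
  hence ne: "ebr v \<noteq> ebr u" using ebr_inj by (auto simp: inj_eq)
  have eqd: "Br (ebr v) - (Br (ebr v) \<inter> Br (ebr u)) = Br (ebr v) - Br (ebr u)" by blast
  have "infinite (Br (ebr v) - (Br (ebr v) \<inter> Br (ebr u)))"
    by (rule Diff_infinite_finite[OF Br_ad[OF ne] Br_inf])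
  hence "infinite (Br (ebr v) - Br (ebr u))" unfolding eqd .
  hence inf: "\<forall>k. \<exists>n\<ge>k. n \<in> Br (ebr v) - Br (ebr u)" unfolding infinite_nat_iff_unbounded_le .
  have "\<forall>k. \<exists>n\<ge>k. gs u n < gs v n"
  proof
    fix k obtain n where "n \<ge> k" "n \<in> Br (ebr v) - Br (ebr u)" using inf by blast
    hence "n \<ge> k \<and> gs u n < gs v n" unfolding gs_def by simp
    thus "\<exists>n\<ge>k. gs u n < gs v n" by blast
  qed
  thus ?thesis by (rule sg_notsub[OF good_gs good_gs])
qed

lemma RSe_good: "\<sigma> \<in> Re \<union> Se \<Longrightarrow> \<exists>g. good g \<and> \<sigma> = sg g"
proof -
  assume "\<sigma> \<in> Re \<union> Se"
  hence "(\<exists>u. \<sigma> = sg (\<lambda>n. cs u)) \<or> (\<exists>u. \<sigma> = sg (gs u))" unfolding Re_def Se_def by blast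
  thus ?thesis
  proof
    assume "\<exists>u. \<sigma> = sg (\<lambda>n. cs u)"
    then obtain u where "\<sigma> = sg (\<lambda>n. cs u)" by blast
    thus ?thesis using good_cs[of u] by blast
  next
    assume "\<exists>u. \<sigma> = sg (gs u)"
    then obtain u where "\<sigma> = sg (gs u)" by blast
    thus ?thesis using good_gs[of u] by blast
  qed
qed

lemma eta_props:
  "Re \<subseteq> L0" "topchain Re" "Re \<approx> (UNIV :: real set)"
  "Se \<subseteq> L0" "pairwise_incomparable Se" "Se \<approx> (UNIV :: real set)"
  "\<forall>\<sigma>\<in>Re \<union> Se. \<tau>1 \<subseteq> \<sigma> \<and> \<sigma> \<subseteq> \<tau>2"
  "Re \<subseteq> L0star" "Se \<subseteq> L0star"
  "\<forall>\<sigma>\<in>Re \<union> Se. \<forall>\<sigma>'\<in>Re \<union> Se. top_of \<sigma> homeomorphic_space top_of \<sigma>'"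
proof -
  show "Re \<subseteq> L0"
  proof
    fix \<sigma> assume "\<sigma> \<in> Re" then obtain u where "\<sigma> = sg (\<lambda>n. cs u)" unfolding Re_def by blast
    thus "\<sigma> \<in> L0" using sg_L0[OF good_cs] by simp
  qed
  show "Se \<subseteq> L0"
  proof
    fix \<sigma> assume "\<sigma> \<in> Se" then obtain u where "\<sigma> = sg (gs u)" unfolding Se_def by blast
    thus "\<sigma> \<in> L0" using sg_L0[OF good_gs] by simp
  qed
  show "Re \<subseteq> L0star"
  proof
    fix \<sigma> assume "\<sigma> \<in> Re" then obtain u where "\<sigma> = sg (\<lambda>n. cs u)" unfolding Re_def by blast
    thus "\<sigma> \<in> L0star" using sg_star[OF good_cs] by simp
  qed
  show "Se \<subseteq> L0star"
  proof
    fix \<sigma> assume "\<sigma> \<in> Se" then obtain u where "\<sigma> = sg (gs u)" unfolding Se_def by blast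
    thus "\<sigma> \<in> L0star" using sg_star[OF good_gs] by simp
  qed
  show "\<forall>\<sigma>\<in>Re \<union> Se. \<tau>1 \<subseteq> \<sigma> \<and> \<sigma> \<subseteq> \<tau>2"
  proof
    fix \<sigma> assume "\<sigma> \<in> Re \<union> Se"
    then obtain g where "good g" "\<sigma> = sg g" using RSe_good by blast
    thus "\<tau>1 \<subseteq> \<sigma> \<and> \<sigma> \<subseteq> \<tau>2" using sg_L0 by simp
  qed
  show "\<forall>\<sigma>\<in>Re \<union> Se. \<forall>\<sigma>'\<in>Re \<union> Se. top_of \<sigma> homeomorphic_space top_of \<sigma>'"
  proof (intro ballI)
    fix \<sigma> \<sigma>' assume "\<sigma> \<in> Re \<union> Se" "\<sigma>' \<in> Re \<union> Se"
    then obtain g g' where "good g" "\<sigma> = sg g" "good g'" "\<sigma>' = sg g'" using RSe_good by metis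
    thus "top_of \<sigma> homeomorphic_space top_of \<sigma>'" using sg_homeo by simp
  qed
  show "topchain Re" unfolding topchain_def Re_def
  proof (intro ballI)
    fix a b assume "a \<in> range (\<lambda>u. sg (\<lambda>n. cs u))" "b \<in> range (\<lambda>u. sg (\<lambda>n. cs u))"
    then obtain u v where ab: "a = sg (\<lambda>n. cs u)" "b = sg (\<lambda>n. cs v)" by blast
    show "a \<subseteq> b \<or> b \<subseteq> a"
    proof (cases "u \<le> v")
      case True thus ?thesis unfolding ab using Re_le[of u v] by simp
    next
      case False thus ?thesis unfolding ab using Re_le[of v u] by simp
    qed
  qed
  have "inj (\<lambda>u. sg (\<lambda>n. cs u))"
  proof (rule injI)
    fix u v assume eq: "sg (\<lambda>n. cs u) = sg (\<lambda>n. cs v)"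
    show "u = v"
    proof (rule ccontr)
      assume "u \<noteq> v"
      hence "u < v \<or> v < u" by arith
      thus False
      proof
        assume "u < v" from Re_strict[OF this] eq show False by simp
      next
        assume "v < u" from Re_strict[OF this] eq show False by simp
      qed
    qed
  qed
  thus "Re \<approx> (UNIV :: real set)" unfolding Re_def by (rule range_eqpoll)
  show "pairwise_incomparable Se" unfolding pairwise_incomparable_def Se_def
  proof (intro ballI impI)
    fix a b assume "a \<in> range (\<lambda>u. sg (gs u))" "b \<in> range (\<lambda>u. sg (gs u))" and ab: "a \<noteq> b"
    then obtain u v where uv: "a = sg (gs u)" "b = sg (gs v)" by blast
    hence ne: "u \<noteq> v" using ab by blast
    show "\<not> a \<subseteq> b \<and> \<not> b \<subseteq> a" unfolding uv using Se_inc[OF ne] Se_inc[OF ne[symmetric]] by simp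
  qed
  have "inj (\<lambda>u. sg (gs u))"
  proof (rule injI)
    fix u v assume eq: "sg (gs u) = sg (gs v)"
    show "u = v"
    proof (rule ccontr)
      assume "u \<noteq> v"
      from Se_inc[OF this] eq show False by simp
    qed
  qed
  thus "Se \<approx> (UNIV :: real set)" unfolding Se_def by (rule range_eqpoll)
qed

end

theorem theorem8:
  assumes "\<tau>1 \<in> L0star" and "\<tau>2 \<in> L0" and "\<tau>1 \<subset> \<tau>2"
  shows "\<exists>R S T.
     R \<subseteq> L0 \<and> topchain R \<and> R \<approx> (UNIV :: real set) \<and>
     S \<subseteq> L0 \<and> pairwise_incomparable S \<and> S \<approx> (UNIV :: real set) \<and>
     T \<subseteq> L0 - L0star \<and> pairwise_incomparable T \<and> T \<approx> (UNIV :: real set set) \<and>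
     (\<forall>\<tau>\<in>R \<union> S \<union> T. \<tau>1 \<subseteq> \<tau> \<and> \<tau> \<subseteq> \<tau>2) \<and>
     (\<tau>2 \<in> L0star \<longrightarrow> R \<subseteq> L0star \<and> S \<subseteq> L0star) \<and>
     (\<tau>2 = eta \<longrightarrow> R \<subseteq> L0star \<and> S \<subseteq> L0star \<and>
        (\<forall>\<sigma>\<in>R \<union> S. \<forall>\<sigma>'\<in>R \<union> S. top_of \<sigma> homeomorphic_space top_of \<sigma>'))"
proof -
  obtain W \<delta> x r where W: "W \<in> \<tau>2" "0 \<in> W" and d: "\<delta> > 0" "ball 0 \<delta> \<subseteq> W"
    and rr: "\<forall>n::nat. 0 < r n \<and> r n \<le> 1/4 \<and> r n \<le> \<delta>/4 \<and> x n \<notin> W"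
    and sp: "\<forall>m n. m \<noteq> n \<longrightarrow> 1 < \<bar>x m - x n\<bar>"
    and bb: "\<forall>V\<in>nbhds \<tau>1 0. \<exists>m. \<forall>n\<ge>m. ball (x n) (r n) \<subseteq> V"
    using setup_seq[OF assms] by blast
  have t12: "\<tau>1 \<subseteq> \<tau>2" using assms(3) by blast
  interpret S: setting \<tau>1 \<tau>2 W \<delta> x r
  proof
    show "\<tau>1 \<in> L0star" "\<tau>2 \<in> L0" "\<tau>1 \<subseteq> \<tau>2" using assms(1,2) t12 by auto
    show "W \<in> \<tau>2" "0 \<in> W" "\<delta> > 0" "ball 0 \<delta> \<subseteq> W" using W d by auto
    fix n show "0 < r n" "r n \<le> 1/4" "r n \<le> \<delta>/4" "x n \<notin> W" using rr by auto
  next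
    fix m n :: nat assume "m \<noteq> n" thus "1 < \<bar>x m - x n\<bar>" using sp by blast
  next
    fix V assume "V \<in> nbhds \<tau>1 0" thus "\<exists>m. \<forall>n\<ge>m. ball (x n) (r n) \<subseteq> V" using bb by blast
  qed
  show ?thesis
  proof (cases "\<tau>2 = eta")
    case True
    interpret E: eta_setting \<tau>1 \<tau>2 W \<delta> x r
      by (unfold_locales) (rule True)
    note P = E.eta_props
    note T = S.Tg_props
    have a: "\<forall>\<tau>\<in>E.Re \<union> E.Se \<union> S.Tg. \<tau>1 \<subseteq> \<tau> \<and> \<tau> \<subseteq> \<tau>2"
    proof
      fix \<tau> assume "\<tau> \<in> E.Re \<union> E.Se \<union> S.Tg"
      hence "\<tau> \<in> E.Re \<union> E.Se \<or> \<tau> \<in> S.Tg" by blast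
      thus "\<tau>1 \<subseteq> \<tau> \<and> \<tau> \<subseteq> \<tau>2"
      proof
        assume "\<tau> \<in> E.Re \<union> E.Se" thus ?thesis using P(7) by blast
      next
        assume "\<tau> \<in> S.Tg" thus ?thesis using T(4) by blast
      qed
    qed
    show ?thesis
      apply (rule exI[of _ E.Re], rule exI[of _ E.Se], rule exI[of _ S.Tg])
      using P(1,2,3,4,5,6,8,9,10) T(1,2,3) a by simp
  next
    case False
    note R = S.Rg_props
    note Sg = S.Sg_props
    note T = S.Tg_props
    have a: "\<forall>\<tau>\<in>S.Rg \<union> S.Sg \<union> S.Tg. \<tau>1 \<subseteq> \<tau> \<and> \<tau> \<subseteq> \<tau>2"
    proof
      fix \<tau> assume "\<tau> \<in> S.Rg \<union> S.Sg \<union> S.Tg"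
      hence "\<tau> \<in> S.Rg \<or> \<tau> \<in> S.Sg \<or> \<tau> \<in> S.Tg" by blast
      thus "\<tau>1 \<subseteq> \<tau> \<and> \<tau> \<subseteq> \<tau>2"
      proof (elim disjE)
        assume "\<tau> \<in> S.Rg" thus ?thesis using R(4) by blast
      next
        assume "\<tau> \<in> S.Sg" thus ?thesis using Sg(4) by blast
      next
        assume "\<tau> \<in> S.Tg" thus ?thesis using T(4) by blast
      qed
    qed
    show ?thesis
      apply (rule exI[of _ S.Rg], rule exI[of _ S.Sg], rule exI[of _ S.Tg])
      using R(1,2,3,5) Sg(1,2,3,5) T(1,2,3) a False by simp
  qed
qed


end
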